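(* Let $c\ge 0$ be a constant. For all sufficiently large $n$, for every $c\log n$-random labeled graph $G$ on $n$ nodes, in model II $\wedge$ $\gamma$ (nodes know their neighbours; arbitrary relabeling allowed) with node labels of $(1+(c+3)\log n)\log n$ bits, there is a shortest path routing scheme whose local routing functions are stored in $O(1)$ bits per node; hence the complete routing scheme (including labels) uses $(c+3)n\log^2 n+n\log n+O(n)$ bits.
   Context: $C(x\mid y)$ is Kolmogorov complexity w.r.t. a fixed universal Turing machine; $\log$ is base 2. A labeled graph $G$ on $V=\{1,\dots,n\}$ is encoded by $E(G)\in\{0,1\}^{n(n-1)/2}$ (bit $i$ indicates the $i$-th possible edge in lexicographic order); with $\mathcal G$ the set of all labeled graphs on $V$, $G$ is $\delta(n)$-random if $C(E(G)\mid n,\delta,\mathcal G)\ge n(n-1)/2-\delta(n)$. Routing: edges at a node $v$ are attached to ports $1,\dots,\deg(v)$. A routing scheme consists of a local routing function at every node $u$ returning, for each destination label $v\ne u$, an edge at $u$; a shortest path routing scheme always yields shortest paths. Space = total bits of all local routing functions plus, in model $\gamma$, bits of labels. Model II: each node knows for free the labels of its neighbours and which edge leads to each. Model $\gamma$: nodes may be given arbitrary new labels before the scheme is computed; destinations are given by the new labels; label bits are charged. *)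

theory Defs
  imports Complex_Main "HOL-Library.Nat_Bijection"
begin

datatype recf = Z | S | Id nat | Cn recf "recf list" | Pr recf recf | Mn recf

inductive eval :: "recf \<Rightarrow> nat list \<Rightarrow> nat \<Rightarrow> bool" where
  eval_Z: "eval Z xs 0"
| eval_S: "eval S (x # xs) (Suc x)"
| eval_Id: "i < length xs \<Longrightarrow> eval (Id i) xs (xs ! i)"
| eval_Cn: "list_all2 (\<lambda>g y. eval g xs y) gs ys \<Longrightarrow> eval f ys z \<Longrightarrow> eval (Cn f gs) xs z"
| eval_Pr0: "eval f xs z \<Longrightarrow> eval (Pr f g) (0 # xs) z"
| eval_PrS: "eval (Pr f g) (x # xs) y \<Longrightarrow> eval g (x # y # xs) z \<Longrightarrow> eval (Pr f g) (Suc x # xs) z"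
| eval_Mn: "eval f (x # xs) 0 \<Longrightarrow> (\<forall>y<x. \<exists>z. eval f (y # xs) z \<and> z \<noteq> 0) \<Longrightarrow> eval (Mn f) xs x"

text \<open>Bijective coding of bit strings as natural numbers.\<close>
fun bl2n :: "bool list \<Rightarrow> nat" where
  "bl2n [] = 0"
| "bl2n (False # xs) = 2 * bl2n xs + 1"
| "bl2n (True # xs) = 2 * bl2n xs + 2"

definition computable_descr :: "(bool list \<Rightarrow> nat \<Rightarrow> bool list option) \<Rightarrow> bool" where
  "computable_descr \<phi> \<longleftrightarrow>
     (\<exists>f. \<forall>p y x. \<phi> p y = Some x \<longleftrightarrow> eval f [bl2n p, y] (bl2n x))"

definition KC :: "(bool list \<Rightarrow> nat \<Rightarrow> bool list option) \<Rightarrow> bool list \<Rightarrow> nat \<Rightarrow> nat" where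
  "KC U x y = (LEAST l. \<exists>p. length p = l \<and> U p y = Some x)"

definition universal :: "(bool list \<Rightarrow> nat \<Rightarrow> bool list option) \<Rightarrow> bool" where
  "universal U \<longleftrightarrow> computable_descr U \<and>
     (\<forall>\<phi>. computable_descr \<phi> \<longrightarrow>
        (\<exists>k. \<forall>p y x. \<phi> p y = Some x \<longrightarrow> (\<exists>q. U q y = Some x \<and> length q \<le> length p + k)))"

definition is_graph :: "nat \<Rightarrow> (nat \<Rightarrow> nat \<Rightarrow> bool) \<Rightarrow> bool" where
  "is_graph n adj \<longleftrightarrow> (\<forall>i j. adj i j \<longrightarrow> i \<in> {1..n} \<and> j \<in> {1..n} \<and> i \<noteq> j \<and> adj j i)"

definition edge_slots :: "nat \<Rightarrow> (nat \<times> nat) list" where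
  "edge_slots n = concat (map (\<lambda>i. map (\<lambda>j. (i, j)) [Suc i..<Suc n]) [1..<Suc n])"

definition graph_code :: "nat \<Rightarrow> (nat \<Rightarrow> nat \<Rightarrow> bool) \<Rightarrow> bool list" where
  "graph_code n adj = map (\<lambda>(i, j). adj i j) (edge_slots n)"

text \<open>delta-randomness, with the condition encoded by n (which determines the class of graphs).\<close>
definition random_graph :: "(bool list \<Rightarrow> nat \<Rightarrow> bool list option) \<Rightarrow> real \<Rightarrow> nat \<Rightarrow> (nat \<Rightarrow> nat \<Rightarrow> bool) \<Rightarrow> bool" where
  "random_graph U \<delta> n adj \<longleftrightarrow>
     real (KC U (graph_code n adj) n) \<ge> real (n * (n - 1) div 2) - \<delta>"

inductive walk :: "(nat \<Rightarrow> nat \<Rightarrow> bool) \<Rightarrow> nat \<Rightarrow> nat \<Rightarrow> nat \<Rightarrow> bool" for adj where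
  walk0: "walk adj 0 u u"
| walkS: "adj u w \<Longrightarrow> walk adj k w v \<Longrightarrow> walk adj (Suc k) u v"

definition is_dist :: "(nat \<Rightarrow> nat \<Rightarrow> bool) \<Rightarrow> nat \<Rightarrow> nat \<Rightarrow> nat \<Rightarrow> bool" where
  "is_dist adj u v d \<longleftrightarrow> walk adj d u v \<and> (\<forall>k<d. \<not> walk adj k u v)"

text \<open>Port assignment: for each node u a list of its neighbours, port i (1-based) being
  entry i-1.\<close>
definition valid_ports :: "nat \<Rightarrow> (nat \<Rightarrow> nat \<Rightarrow> bool) \<Rightarrow> (nat \<Rightarrow> nat list) \<Rightarrow> bool" where
  "valid_ports n adj ports \<longleftrightarrow>
     (\<forall>u\<in>{1..n}. distinct (ports u) \<and> set (ports u) = {w. adj u w})"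

text \<open>nh v x = next node chosen at x for destination v. The scheme yields shortest paths.\<close>
definition shortest_path_routing :: "nat \<Rightarrow> (nat \<Rightarrow> nat \<Rightarrow> bool) \<Rightarrow> (nat \<Rightarrow> nat \<Rightarrow> nat) \<Rightarrow> bool" where
  "shortest_path_routing n adj nh \<longleftrightarrow>
     (\<forall>u\<in>{1..n}. \<forall>v\<in>{1..n}. u \<noteq> v \<longrightarrow>
        (\<exists>d. is_dist adj u v d \<and>
             (\<forall>i<d. adj ((nh v ^^ i) u) ((nh v ^^ Suc i) u)) \<and>
             (nh v ^^ d) u = v))"

text \<open>The interpreter D receives the bits stored at node u, u's label, the labels of u's
  neighbours in port order (model II knowledge), and the destination label; it returns
  a port number.\<close>
definition computable_router :: "(bool list \<Rightarrow> bool list \<Rightarrow> bool list list \<Rightarrow> bool list \<Rightarrow> nat) \<Rightarrow> bool" where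
  "computable_router D \<longleftrightarrow>
     (\<exists>f. \<forall>a b cs d r. D a b cs d = r \<longleftrightarrow>
        eval f [bl2n a, bl2n b, list_encode (map bl2n cs), bl2n d] r)"

definition next_hop ::
  "(bool list \<Rightarrow> bool list \<Rightarrow> bool list list \<Rightarrow> bool list \<Rightarrow> nat) \<Rightarrow> (nat \<Rightarrow> nat list) \<Rightarrow>
   (nat \<Rightarrow> bool list) \<Rightarrow> (nat \<Rightarrow> bool list) \<Rightarrow> nat \<Rightarrow> nat \<Rightarrow> nat" where
  "next_hop D ports lab bits v u =
     ports u ! (D (bits u) (lab u) (map lab (ports u)) (lab v) - 1)"

definition routes_by_ports ::
  "nat \<Rightarrow> (bool list \<Rightarrow> bool list \<Rightarrow> bool list list \<Rightarrow> bool list \<Rightarrow> nat) \<Rightarrow> (nat \<Rightarrow> nat list) \<Rightarrow>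
   (nat \<Rightarrow> bool list) \<Rightarrow> (nat \<Rightarrow> bool list) \<Rightarrow> bool" where
  "routes_by_ports n D ports lab bits \<longleftrightarrow>
     (\<forall>u\<in>{1..n}. \<forall>v\<in>{1..n}. u \<noteq> v \<longrightarrow>
        D (bits u) (lab u) (map lab (ports u)) (lab v) \<in> {1..length (ports u)})"

end

theory Submission
  imports Defs
begin


definition rec_fn :: "nat \<Rightarrow> (nat list \<Rightarrow> nat) \<Rightarrow> bool" where
  "rec_fn k F \<longleftrightarrow> (\<exists>t. \<forall>xs. length xs = k \<longrightarrow> (\<forall>r. eval t xs r \<longleftrightarrow> r = F xs))"

lemma rec_fnI: "(\<And>xs r. length xs = k \<Longrightarrow> eval t xs r \<longleftrightarrow> r = F xs) \<Longrightarrow> rec_fn k F"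
  unfolding rec_fn_def by blast

lemma rf_cong: "rec_fn k f \<Longrightarrow> (\<And>xs. length xs = k \<Longrightarrow> f xs = g xs) \<Longrightarrow> rec_fn k g"
  unfolding rec_fn_def by metis

lemma eval_Z_iff: "eval Z xs r \<longleftrightarrow> r = 0"
  by (auto intro: eval.intros elim: eval.cases)
lemma eval_S_iff: "eval S (x#xs) r \<longleftrightarrow> r = Suc x"
  by (auto intro: eval.intros elim: eval.cases)
lemma eval_Id_iff: "i < length xs \<Longrightarrow> eval (Id i) xs r \<longleftrightarrow> r = xs ! i"
  by (auto intro: eval.intros elim: eval.cases)
lemma eval_Cn_iff: "eval (Cn f gs) xs z \<longleftrightarrow> (\<exists>ys. list_all2 (\<lambda>g y. eval g xs y) gs ys \<and> eval f ys z)"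
  by (auto intro: eval.intros elim: eval.cases)
lemma eval_Pr0_iff: "eval (Pr f g) (0#xs) z \<longleftrightarrow> eval f xs z"
  by (auto intro: eval.intros elim: eval.cases)
lemma eval_PrS_iff: "eval (Pr f g) (Suc x#xs) z \<longleftrightarrow> (\<exists>y. eval (Pr f g) (x#xs) y \<and> eval g (x#y#xs) z)"
  by (auto intro: eval.intros elim: eval.cases)
lemma eval_Mn_iff: "eval (Mn f) xs x \<longleftrightarrow> eval f (x#xs) 0 \<and> (\<forall>y<x. \<exists>z. eval f (y#xs) z \<and> z \<noteq> 0)"
  by (auto intro: eval.intros elim: eval.cases)

lemma rf_comp:
  assumes f: "rec_fn (length gs) f" and gs: "\<forall>g\<in>set gs. rec_fn k g"
  shows "rec_fn k (\<lambda>xs. f (map (\<lambda>g. g xs) gs))"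
proof -
  from gs have "\<forall>g\<in>set gs. \<exists>t. \<forall>xs. length xs = k \<longrightarrow> (\<forall>r. eval t xs r \<longleftrightarrow> r = g xs)"
    by (simp add: rec_fn_def)
  then obtain T where T: "\<And>g xs r. g \<in> set gs \<Longrightarrow> length xs = k \<Longrightarrow> eval (T g) xs r \<longleftrightarrow> r = g xs"
    using bchoice by metis
  from f obtain tf where tf: "\<And>ys r. length ys = length gs \<Longrightarrow> eval tf ys r \<longleftrightarrow> r = f ys"
    by (auto simp: rec_fn_def)
  have L: "list_all2 (\<lambda>t y. eval t xs y) (map T hs) ys \<longleftrightarrow> ys = map (\<lambda>g. g xs) hs"
    if "set hs \<subseteq> set gs" "length xs = k" for hs ys xs
    using that by (induction hs arbitrary: ys) (auto simp: list_all2_Cons1 T)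
  show ?thesis
  proof (rule rec_fnI[where t="Cn tf (map T gs)"])
    fix xs :: "nat list" and r :: nat assume "length xs = k"
    then show "eval (Cn tf (map T gs)) xs r = (r = f (map (\<lambda>g. g xs) gs))"
      by (simp add: eval_Cn_iff L tf)
  qed
qed

lemma rf_Pr:
  assumes "rec_fn k f" "rec_fn (Suc (Suc k)) g"
  shows "rec_fn (Suc k) (\<lambda>xs. rec_nat (f (tl xs)) (\<lambda>i acc. g (i # acc # tl xs)) (hd xs))"
proof -
  obtain tf where tf: "\<And>ys r. length ys = k \<Longrightarrow> eval tf ys r \<longleftrightarrow> r = f ys"
    using assms(1) by (auto simp: rec_fn_def)
  obtain tg where tg: "\<And>ys r. length ys = Suc (Suc k) \<Longrightarrow> eval tg ys r \<longleftrightarrow> r = g ys"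
    using assms(2) by (auto simp: rec_fn_def)
  have P: "eval (Pr tf tg) (x#ys) r \<longleftrightarrow> r = rec_nat (f ys) (\<lambda>i acc. g (i#acc#ys)) x"
    if "length ys = k" for x ys r
    using that by (induction x arbitrary: r) (auto simp: eval_Pr0_iff eval_PrS_iff tf tg)
  show ?thesis
  proof (rule rec_fnI[where t="Pr tf tg"])
    fix xs :: "nat list" and r :: nat assume "length xs = Suc k"
    then obtain x ys where "xs = x # ys" "length ys = k" by (cases xs) auto
    then show "eval (Pr tf tg) xs r = (r = rec_nat (f (tl xs)) (\<lambda>i acc. g (i # acc # tl xs)) (hd xs))"
      using P by simp
  qed
qed

lemma rf_Mn:
  assumes "rec_fn (Suc k) f" "\<And>xs. length xs = k \<Longrightarrow> \<exists>x. f (x#xs) = 0"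
  shows "rec_fn k (\<lambda>xs. LEAST x. f (x#xs) = 0)"
proof -
  obtain tf where tf: "\<And>ys r. length ys = Suc k \<Longrightarrow> eval tf ys r \<longleftrightarrow> r = f ys"
    using assms(1) by (auto simp: rec_fn_def)
  show ?thesis
  proof (rule rec_fnI[where t="Mn tf"])
    fix xs :: "nat list" and r :: nat assume l: "length xs = k"
    have "eval (Mn tf) xs r \<longleftrightarrow> f (r#xs) = 0 \<and> (\<forall>y<r. f (y#xs) \<noteq> 0)"
      using l by (simp add: eval_Mn_iff tf)
    also have "\<dots> \<longleftrightarrow> r = (LEAST x. f (x#xs) = 0)"
    proof
      assume "f (r#xs) = 0 \<and> (\<forall>y<r. f (y#xs) \<noteq> 0)"
      then show "r = (LEAST x. f (x#xs) = 0)"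
        by (metis (mono_tags, lifting) Least_equality not_less)
    next
      assume r: "r = (LEAST x. f (x#xs) = 0)"
      from assms(2)[OF l] obtain x where "f (x#xs) = 0" by blast
      then have "f (r#xs) = 0" unfolding r by (rule LeastI)
      moreover have "\<forall>y<r. f (y#xs) \<noteq> 0" unfolding r using not_less_Least by blast
      ultimately show "f (r#xs) = 0 \<and> (\<forall>y<r. f (y#xs) \<noteq> 0)" by blast
    qed
    finally show "eval (Mn tf) xs r = (r = (LEAST x. f (x#xs) = 0))" .
  qed
qed

lemma rf_proj: "i < k \<Longrightarrow> rec_fn k (\<lambda>xs. xs ! i)"
  by (rule rec_fnI[where t="Id i"]) (simp add: eval_Id_iff)

lemma rf_zero: "rec_fn k (\<lambda>xs. 0)"
  by (rule rec_fnI[where t="Z"]) (simp add: eval_Z_iff)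

lemma rf_S1: "rec_fn 1 (\<lambda>xs. Suc (xs ! 0))"
proof (rule rec_fnI[where t="S"])
  fix xs :: "nat list" and r :: nat assume "length xs = (1::nat)"
  then obtain x where "xs = [x]" by (cases xs) auto
  then show "eval S xs r = (r = Suc (xs ! 0))" by (simp add: eval_S_iff)
qed

lemma rf_comp1: "rec_fn 1 (\<lambda>ys. f (ys!0)) \<Longrightarrow> rec_fn k a \<Longrightarrow> rec_fn k (\<lambda>xs. f (a xs))"
  using rf_comp[of "[a]" "\<lambda>ys. f (ys!0)" k] by simp

lemma rf_comp2: "rec_fn 2 (\<lambda>ys. f (ys!0) (ys!1)) \<Longrightarrow> rec_fn k a \<Longrightarrow> rec_fn k b \<Longrightarrow>
   rec_fn k (\<lambda>xs. f (a xs) (b xs))"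
  using rf_comp[of "[a,b]" "\<lambda>ys. f (ys!0) (ys!1)" k] by (simp add: numeral_2_eq_2)

lemma rf_comp3: "rec_fn 3 (\<lambda>ys. f (ys!0) (ys!1) (ys!2)) \<Longrightarrow> rec_fn k a \<Longrightarrow> rec_fn k b \<Longrightarrow>
   rec_fn k c \<Longrightarrow> rec_fn k (\<lambda>xs. f (a xs) (b xs) (c xs))"
  using rf_comp[of "[a,b,c]" "\<lambda>ys. f (ys!0) (ys!1) (ys!2)" k] by (simp add: numeral_3_eq_3)

lemma rf_Suc: "rec_fn k a \<Longrightarrow> rec_fn k (\<lambda>xs. Suc (a xs))"
  using rf_comp1[OF rf_S1] .

lemma rf_const: "rec_fn k (\<lambda>xs. c)"
  by (induction c) (auto intro: rf_zero rf_Suc)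

lemma map_nth_upt: "length xs = k \<Longrightarrow> map (\<lambda>i. xs ! i) [0..<k] = xs"
  by (metis map_nth)

lemma rf_prim:
  assumes b: "rec_fn k b" and s: "rec_fn (Suc (Suc k)) s" and g: "rec_fn k g"
  shows "rec_fn k (\<lambda>xs. rec_nat (b xs) (\<lambda>i acc. s (i # acc # xs)) (g xs))"
proof -
  let ?H = "\<lambda>xs. rec_nat (b (tl xs)) (\<lambda>i acc. s (i # acc # tl xs)) (hd xs)"
  have H: "rec_fn (Suc k) ?H" by (rule rf_Pr[OF b s])
  let ?gs = "g # map (\<lambda>i xs. xs ! i) [0..<k]"
  have "rec_fn k (\<lambda>xs. ?H (map (\<lambda>h. h xs) ?gs))"
    by (rule rf_comp) (use H g rf_proj in auto)
  then show ?thesis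
    by (rule rf_cong) (simp add: comp_def map_nth_upt)
qed

lemma rf_reindex:
  assumes "rec_fn k h" "\<forall>i<k. idx i < m"
  shows "rec_fn m (\<lambda>zs. h (map (\<lambda>i. zs ! idx i) [0..<k]))"
proof -
  have "rec_fn m (\<lambda>zs. h (map (\<lambda>g. g zs) (map (\<lambda>i zs. zs ! idx i) [0..<k])))"
    by (rule rf_comp) (use assms rf_proj in auto)
  then show ?thesis by (simp add: comp_def)
qed




lemma rec_nat_add: "rec_nat y (\<lambda>i acc. Suc acc) x = x + (y::nat)"
  by (induction x) auto
lemma rf_add: "rec_fn k a \<Longrightarrow> rec_fn k b \<Longrightarrow> rec_fn k (\<lambda>xs. a xs + b xs)"
proof -
  have "rec_fn 2 (\<lambda>xs. rec_nat (xs!1) (\<lambda>i acc. Suc ((i#acc#xs)!1)) (xs!0))"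
    by (rule rf_prim[where b="\<lambda>xs. xs!1" and s="\<lambda>zs. Suc (zs!1)" and g="\<lambda>xs. xs!0"])
      (rule rf_proj rf_Suc | (simp; fail))+
  then have "rec_fn 2 (\<lambda>ys. ys!0 + ys!1)" by (rule rf_cong) (simp add: rec_nat_add)
  then show "rec_fn k a \<Longrightarrow> rec_fn k b \<Longrightarrow> rec_fn k (\<lambda>xs. a xs + b xs)" by (rule rf_comp2)
qed

lemma rec_nat_pred: "rec_nat 0 (\<lambda>i acc. i) x = x - (1::nat)"
  by (induction x) auto
lemma rf_pred: "rec_fn k a \<Longrightarrow> rec_fn k (\<lambda>xs. a xs - 1)"
proof -
  have "rec_fn 1 (\<lambda>xs. rec_nat 0 (\<lambda>i acc. (i#acc#xs)!0) (xs!0))"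
    by (rule rf_prim[where b="\<lambda>xs. 0" and s="\<lambda>zs. zs!0" and g="\<lambda>xs. xs!0"])
      (rule rf_proj rf_const | (simp; fail))+
  then have "rec_fn 1 (\<lambda>ys. ys!0 - 1)" by (rule rf_cong) (simp add: rec_nat_pred)
  then show "rec_fn k a \<Longrightarrow> rec_fn k (\<lambda>xs. a xs - 1)" by (rule rf_comp1)
qed

lemma rec_nat_minus: "rec_nat x (\<lambda>i acc. acc - Suc 0) y = x - (y::nat)"
  by (induction y) auto
lemma rf_minus: "rec_fn k a \<Longrightarrow> rec_fn k b \<Longrightarrow> rec_fn k (\<lambda>xs. a xs - b xs)"
proof -
  have "rec_fn 2 (\<lambda>xs. rec_nat (xs!0) (\<lambda>i acc. (i#acc#xs)!1 - 1) (xs!1))"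
    by (rule rf_prim[where b="\<lambda>xs. xs!0" and s="\<lambda>zs. zs!1 - 1" and g="\<lambda>xs. xs!1"])
      (rule rf_proj rf_pred | (simp; fail))+
  then have "rec_fn 2 (\<lambda>ys. ys!0 - ys!1)" by (rule rf_cong) (simp add: rec_nat_minus)
  then show "rec_fn k a \<Longrightarrow> rec_fn k b \<Longrightarrow> rec_fn k (\<lambda>xs. a xs - b xs)" by (rule rf_comp2)
qed

lemma rec_nat_mult: "rec_nat 0 (\<lambda>i acc. acc + y) x = x * (y::nat)"
  by (induction x) auto
lemma rf_mult: "rec_fn k a \<Longrightarrow> rec_fn k b \<Longrightarrow> rec_fn k (\<lambda>xs. a xs * b xs)"
proof -
  have "rec_fn 2 (\<lambda>xs. rec_nat 0 (\<lambda>i acc. (i#acc#xs)!1 + (i#acc#xs)!3) (xs!0))"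
    by (rule rf_prim[where b="\<lambda>xs. 0" and s="\<lambda>zs. zs!1 + zs!3" and g="\<lambda>xs. xs!0"])
      (rule rf_proj rf_add rf_const | (simp; fail))+
  then have "rec_fn 2 (\<lambda>ys. ys!0 * ys!1)" by (rule rf_cong) (simp add: rec_nat_mult)
  then show "rec_fn k a \<Longrightarrow> rec_fn k b \<Longrightarrow> rec_fn k (\<lambda>xs. a xs * b xs)" by (rule rf_comp2)
qed

lemma rec_nat_power: "rec_nat (Suc 0) (\<lambda>i acc. acc * a) b = (a::nat) ^ b"
  by (induction b) auto
lemma rf_power: "rec_fn k a \<Longrightarrow> rec_fn k b \<Longrightarrow> rec_fn k (\<lambda>xs. a xs ^ b xs)"
proof -
  have "rec_fn 2 (\<lambda>xs. rec_nat 1 (\<lambda>i acc. (i#acc#xs)!1 * (i#acc#xs)!2) (xs!1))"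
    by (rule rf_prim[where b="\<lambda>xs. 1" and s="\<lambda>zs. zs!1 * zs!2" and g="\<lambda>xs. xs!1"])
      (rule rf_proj rf_mult rf_const | (simp; fail))+
  then have "rec_fn 2 (\<lambda>ys. ys!0 ^ ys!1)" by (rule rf_cong) (simp add: rec_nat_power)
  then show "rec_fn k a \<Longrightarrow> rec_fn k b \<Longrightarrow> rec_fn k (\<lambda>xs. a xs ^ b xs)" by (rule rf_comp2)
qed

definition rec_pred :: "nat \<Rightarrow> (nat list \<Rightarrow> bool) \<Rightarrow> bool" where
  "rec_pred k P \<longleftrightarrow> rec_fn k (\<lambda>xs. if P xs then 1 else 0)"

lemma rp_eq: "rec_fn k a \<Longrightarrow> rec_fn k b \<Longrightarrow> rec_pred k (\<lambda>xs. a xs = b xs)"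
  unfolding rec_pred_def
  by (rule rf_cong[where f="\<lambda>xs. 1 - ((a xs - b xs) + (b xs - a xs))"])
     (rule rf_minus rf_add rf_const | (simp; fail))+
lemma rp_less: "rec_fn k a \<Longrightarrow> rec_fn k b \<Longrightarrow> rec_pred k (\<lambda>xs. a xs < b xs)"
  unfolding rec_pred_def
  by (rule rf_cong[where f="\<lambda>xs. 1 - (1 - (b xs - a xs))"])
     (rule rf_minus rf_const | (simp; fail))+
lemma rp_le: "rec_fn k a \<Longrightarrow> rec_fn k b \<Longrightarrow> rec_pred k (\<lambda>xs. a xs \<le> b xs)"
  unfolding rec_pred_def
  by (rule rf_cong[where f="\<lambda>xs. 1 - (a xs - b xs)"])
     (rule rf_minus rf_const | (simp; fail))+
lemma rp_not: "rec_pred k P \<Longrightarrow> rec_pred k (\<lambda>xs. \<not> P xs)"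
  unfolding rec_pred_def
  by (rule rf_cong[where f="\<lambda>xs. 1 - (if P xs then 1 else 0)"])
     (rule rf_minus rf_const | (simp; fail))+
lemma rp_and: "rec_pred k P \<Longrightarrow> rec_pred k Q \<Longrightarrow> rec_pred k (\<lambda>xs. P xs \<and> Q xs)"
  unfolding rec_pred_def
  by (rule rf_cong[where f="\<lambda>xs. (if P xs then 1 else 0) * (if Q xs then 1 else 0)"])
     (rule rf_mult | (simp; fail))+
lemma rp_or: "rec_pred k P \<Longrightarrow> rec_pred k Q \<Longrightarrow> rec_pred k (\<lambda>xs. P xs \<or> Q xs)"
  unfolding rec_pred_def
  by (rule rf_cong[where f="\<lambda>xs. 1 - (1 - (if P xs then 1 else 0)) * (1 - (if Q xs then 1 else 0))"])
     (rule rf_mult rf_minus rf_const | (simp; fail))+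
lemma rp_const: "rec_pred k (\<lambda>xs. c)"
  unfolding rec_pred_def by (cases c) (rule rf_const | (simp; fail))+
lemma rf_if: "rec_pred k P \<Longrightarrow> rec_fn k a \<Longrightarrow> rec_fn k b \<Longrightarrow> rec_fn k (\<lambda>xs. if P xs then a xs else b xs)"
  unfolding rec_pred_def
  by (rule rf_cong[where f="\<lambda>xs. (if P xs then 1 else 0) * a xs + (1 - (if P xs then 1 else 0)) * b xs"])
     (rule rf_mult rf_minus rf_add rf_const | (simp; fail))+

lemma rp_least: "rec_pred (Suc k) P \<Longrightarrow> (\<And>xs. length xs = k \<Longrightarrow> \<exists>x. P (x#xs)) \<Longrightarrow>
   rec_fn k (\<lambda>xs. LEAST x. P (x#xs))"
proof -
  assume P: "rec_pred (Suc k) P" and ex: "\<And>xs. length xs = k \<Longrightarrow> \<exists>x. P (x#xs)"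
  have f: "rec_fn (Suc k) (\<lambda>ys. 1 - (if P ys then 1 else 0))"
    by (rule rf_minus[OF rf_const]) (use P in \<open>simp add: rec_pred_def\<close>)
  have "rec_fn k (\<lambda>xs. LEAST x. 1 - (if P (x#xs) then 1 else 0) = (0::nat))"
    by (rule rf_Mn[OF f]) (use ex in auto)
  then show ?thesis by (rule rf_cong) simp
qed

lemma div_least: "(LEAST q. b = 0 \<or> a < (q+1)*b) = (a::nat) div b"
proof (cases "b = 0")
  case False
  show ?thesis
  proof (rule Least_equality)
    have "a mod b < b" using False by simp
    moreover have "a div b * b + a mod b = a" by simp
    moreover have "(a div b + 1) * b = a div b * b + b" by simp
    ultimately show "b = 0 \<or> a < (a div b + 1) * b" by linarith
    fix y assume "b = 0 \<or> a < (y + 1) * b"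
    with False have "a < (y+1)*b" by simp
    then have "a div b < y + 1" by (rule less_mult_imp_div_less)
    then show "a div b \<le> y" by simp
  qed
qed simp

lemma div_least': "(LEAST q. b = 0 \<or> a < b + q*b) = (a::nat) div b"
  using div_least[of b a] by (simp add: algebra_simps)

lemma rf_div: "rec_fn k a \<Longrightarrow> rec_fn k b \<Longrightarrow> rec_fn k (\<lambda>xs. a xs div b xs)"
proof -
  have "rec_fn 2 (\<lambda>xs. LEAST q. (\<lambda>zs. zs!2 = 0 \<or> zs!1 < (zs!0+1)*zs!2) (q#xs))"
  proof (rule rp_least)
    show "rec_pred (Suc 2) (\<lambda>zs. zs!2 = 0 \<or> zs!1 < (zs!0+1)*zs!2)"
      by (rule rp_or rp_eq rp_less rf_proj rf_const rf_mult rf_add | (simp; fail))+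
    fix xs :: "nat list" assume "length xs = 2"
    show "\<exists>x. (\<lambda>zs. zs!2 = 0 \<or> zs!1 < (zs!0+1)*zs!2) (x#xs)"
      by (rule exI[of _ "xs!0"]) (cases "xs!1"; simp)
  qed
  then have "rec_fn 2 (\<lambda>ys. ys!0 div ys!1)" by (rule rf_cong) (simp add: div_least')
  then show "rec_fn k a \<Longrightarrow> rec_fn k b \<Longrightarrow> rec_fn k (\<lambda>xs. a xs div b xs)" by (rule rf_comp2)
qed

lemma rf_mod: "rec_fn k a \<Longrightarrow> rec_fn k b \<Longrightarrow> rec_fn k (\<lambda>xs. a xs mod b xs)"
  by (rule rf_cong[where f="\<lambda>xs. a xs - b xs * (a xs div b xs)"])
     (rule rf_minus rf_mult rf_div | (simp add: minus_mult_div_eq_mod; fail))+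

lemma rp_even: "rec_fn k a \<Longrightarrow> rec_pred k (\<lambda>xs. even (a xs))"
  unfolding rec_pred_def
  by (rule rf_cong[where f="\<lambda>xs. if a xs mod 2 = 0 then 1 else 0"])
     (rule rf_if rp_eq rf_mod rf_const | (simp add: even_iff_mod_2_eq_zero; fail))+

lemma rec_nat_sum: "rec_nat 0 (\<lambda>i acc. acc + h (i#xs)) n = (\<Sum>j<n. h (j#xs))"
  by (induction n) auto

lemma rf_sum:
  assumes h: "rec_fn (Suc k) h" and g: "rec_fn k g"
  shows "rec_fn k (\<lambda>xs. \<Sum>j<g xs. h (j#xs))"
proof -
  let ?idx = "\<lambda>i::nat. if i = 0 then 0 else i + 1"
  have R: "rec_fn (Suc (Suc k)) (\<lambda>zs. h (map (\<lambda>i. zs ! ?idx i) [0..<Suc k]))"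
    by (rule rf_reindex[OF h]) auto
  have E: "map (\<lambda>i. zs ! ?idx i) [0..<Suc k] = zs!0 # drop 2 zs" if "length zs = Suc (Suc k)" for zs
  proof (rule nth_equalityI)
    show "length (map (\<lambda>i. zs ! ?idx i) [0..<Suc k]) = length (zs!0 # drop 2 zs)" using that by simp
    fix i assume "i < length (map (\<lambda>i. zs ! ?idx i) [0..<Suc k])"
    then show "map (\<lambda>i. zs ! ?idx i) [0..<Suc k] ! i = (zs!0 # drop 2 zs) ! i"
      using that by (cases i) (auto simp: nth_drop simp del: upt_Suc)
  qed
  have hs: "rec_fn (Suc (Suc k)) (\<lambda>zs. h (zs!0 # drop 2 zs))"
    using R by (rule rf_cong) (simp only: E)
  have s: "rec_fn (Suc (Suc k)) (\<lambda>zs. zs!1 + h (zs!0 # drop 2 zs))"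
    by (rule rf_add[OF rf_proj hs]) simp
  have "rec_fn k (\<lambda>xs. rec_nat 0 (\<lambda>i acc. (\<lambda>zs. zs!1 + h (zs!0 # drop 2 zs)) (i#acc#xs)) (g xs))"
    by (rule rf_prim[OF rf_const s g])
  then show ?thesis by (rule rf_cong) (simp add: rec_nat_sum)
qed



lemma rf_compL: "rec_fn r f \<Longrightarrow> length gs = r \<Longrightarrow> \<forall>g\<in>set gs. rec_fn k g \<Longrightarrow>
   rec_fn k (\<lambda>xs. f (map (\<lambda>g. g xs) gs))"
  using rf_comp by blast
lemma test_rf: "rec_fn 2 (\<lambda>ys. ys!0 + ys!1 * ys!0)"
  by (rule rf_add rf_mult rf_proj | (simp; fail))+
lemma "rec_fn k a \<Longrightarrow> rec_fn k b \<Longrightarrow> rec_fn k (\<lambda>xs. a xs + b xs * a xs)"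
  using rf_compL[OF test_rf, of "[a,b]" k] by simp



definition hdb :: "nat \<Rightarrow> bool" where "hdb m \<longleftrightarrow> m \<noteq> 0 \<and> even m"
definition tlb :: "nat \<Rightarrow> nat" where "tlb m = (m - 1) div 2"
definition itlb :: "nat \<Rightarrow> nat \<Rightarrow> nat" where "itlb i m = rec_nat m (\<lambda>j acc. tlb acc) i"
definition bitat :: "nat \<Rightarrow> nat \<Rightarrow> bool" where "bitat m k \<longleftrightarrow> hdb (itlb k m)"
definition binv :: "nat \<Rightarrow> nat \<Rightarrow> nat" where "binv m L = (\<Sum>i<L. if bitat m i then 2^i else 0)"
definition wd :: "nat \<Rightarrow> nat" where "wd n = (LEAST w. n < 2^w)"
definition qd :: "nat \<Rightarrow> nat" where "qd n = wd n * wd n div 8"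
definition Md :: "nat \<Rightarrow> nat" where "Md n = 5 * qd n - 1"
definition Ld :: "nat \<Rightarrow> nat" where "Ld n = 8 * qd n + 2 * wd n"
definition Nn :: "nat \<Rightarrow> nat" where "Nn n = n * (n - 1) div 2"
definition start :: "nat \<Rightarrow> nat \<Rightarrow> nat" where "start n a = (\<Sum>j<a. if j = 0 then 0 else n - j)"
definition sa :: "nat \<Rightarrow> nat \<Rightarrow> nat" where "sa n i = (LEAST a. n \<le> a \<or> i < start n (a+1))"
definition sb :: "nat \<Rightarrow> nat \<Rightarrow> nat" where "sb n i = i - start n (sa n i) + sa n i + 1"
definition inW :: "nat \<Rightarrow> nat \<Rightarrow> nat \<Rightarrow> nat \<Rightarrow> bool" where
  "inW M u v x \<longleftrightarrow> 1 \<le> x \<and> x \<le> M \<and> x \<noteq> u \<and> x \<noteq> v"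
definition spec :: "nat \<Rightarrow> nat \<Rightarrow> nat \<Rightarrow> nat \<Rightarrow> nat \<Rightarrow> bool" where
  "spec M u v a b \<longleftrightarrow> ((a = u \<or> a = v) \<and> inW M u v b) \<or> ((b = u \<or> b = v) \<and> inW M u v a)"
definition dig :: "nat \<Rightarrow> nat \<Rightarrow> nat" where "dig t w = t div 3^w mod 3"
definition sbit :: "nat \<Rightarrow> nat \<Rightarrow> nat \<Rightarrow> nat \<Rightarrow> nat \<Rightarrow> bool" where
  "sbit u v t a b \<longleftrightarrow> (if a = u \<or> a = v then (if a = u then dig t b = 1 else dig t b = 2)
      else (if b = u then dig t a = 1 else dig t a = 2))"
definition spi :: "nat \<Rightarrow> nat \<Rightarrow> nat \<Rightarrow> nat \<Rightarrow> nat \<Rightarrow> bool" where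
  "spi n M u v i \<longleftrightarrow> spec M u v (sa n i) (sb n i)"
definition cnt :: "nat \<Rightarrow> nat \<Rightarrow> nat \<Rightarrow> nat \<Rightarrow> nat \<Rightarrow> nat" where
  "cnt n M u v i = (\<Sum>j<i. if spi n M u v j then 1 else 0)"
definition obit :: "nat \<Rightarrow> nat \<Rightarrow> nat \<Rightarrow> nat \<Rightarrow> nat \<Rightarrow> nat \<Rightarrow> nat \<Rightarrow> bool" where
  "obit n M u v t R i \<longleftrightarrow> (if spi n M u v i then sbit u v t (sa n i) (sb n i) else bitat R (i - cnt n M u v i))"
definition outacc :: "nat \<Rightarrow> nat \<Rightarrow> nat \<Rightarrow> nat \<Rightarrow> nat \<Rightarrow> nat \<Rightarrow> nat \<Rightarrow> nat \<Rightarrow> nat" where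
  "outacc n M u v t R N k = rec_nat 0 (\<lambda>j acc. 2*acc + (if obit n M u v t R (N - 1 - j) then 2 else 1)) k"
definition decF :: "nat \<Rightarrow> nat \<Rightarrow> nat" where
  "decF m n = outacc n (Md n) (binv m (Ld n) div (n+1) mod (n+1)) (binv m (Ld n) mod (n+1))
     (binv m (Ld n) div (n+1) div (n+1)) (itlb (Ld n) m) (Nn n) (Nn n)"

definition tri :: "nat \<Rightarrow> nat" where "tri s = s * (s + 1) div 2"
definition ps :: "nat \<Rightarrow> nat" where "ps z = (LEAST s. z < tri (s + 1))"
definition pfst :: "nat \<Rightarrow> nat" where "pfst z = z - tri (ps z)"
definition psnd :: "nat \<Rightarrow> nat" where "psnd z = ps z - pfst z"
definition ltl :: "nat \<Rightarrow> nat" where "ltl c = psnd (c - 1)"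
definition lhd :: "nat \<Rightarrow> nat" where "lhd c = pfst (c - 1)"
definition itl :: "nat \<Rightarrow> nat \<Rightarrow> nat" where "itl i c = rec_nat c (\<lambda>j acc. ltl acc) i"
definition tb :: "nat \<Rightarrow> nat \<Rightarrow> bool" where "tb x k \<longleftrightarrow> \<not> even (x div 2^k)"
definition find1 :: "nat \<Rightarrow> nat \<Rightarrow> nat" where
  "find1 c d = (LEAST i. itl i c = 0 \<or> lhd (itl i c) = d)"
definition find2 :: "nat \<Rightarrow> nat \<Rightarrow> nat" where
  "find2 c d = (LEAST i. itl i c = 0 \<or> tb (psnd d) (pfst (lhd (itl i c))))"
definition Dn :: "nat \<Rightarrow> nat \<Rightarrow> nat" where
  "Dn c d = (if itl (find1 c d) c \<noteq> 0 then find1 c d + 1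
     else if itl (find2 c d) c \<noteq> 0 then find2 c d + 1 else 0)"

lemma tri_gt: "z < tri (z+1)"
proof -
  have "2*(z+1) \<le> (z+1)*(z+1+1)" by simp
  then have "(2*(z+1)) div 2 \<le> (z+1)*(z+1+1) div 2" by (rule div_le_mono)
  then show ?thesis unfolding tri_def by simp
qed

lemma ltl_le: "ltl c \<le> c - 1"
proof -
  have "psnd z \<le> z" for z
  proof -
    have "ps z \<le> z" unfolding ps_def by (rule Least_le) (rule tri_gt)
    then show ?thesis unfolding psnd_def by simp
  qed
  then show ?thesis unfolding ltl_def by blast
qed
lemma itl_le: "itl i c \<le> c - i"
proof (induction i)
  case (Suc i) then show ?case using ltl_le[of "itl i c"] by (simp add: itl_def)
qed (simp add: itl_def)
lemma itl_self: "itl c c = 0" using itl_le[of c c] by simp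

lemma hdb_base: "rec_pred 1 (\<lambda>xs. hdb (xs!0))"
  unfolding hdb_def by (rule rf_add rf_minus rf_mult rf_div rf_mod rf_power rf_if rf_Suc rf_const rf_proj rp_eq rp_less rp_le rp_not rp_and rp_or rp_const rp_even | (simp; fail))+

lemma hdb_rp: "rec_fn k a0 \<Longrightarrow> rec_pred k (\<lambda>xs. hdb (a0 xs))"
  using rf_compL[OF hdb_base[unfolded rec_pred_def], of "[a0]" k] by (simp add: rec_pred_def)

lemma tlb_base: "rec_fn 1 (\<lambda>xs. tlb (xs!0))"
  unfolding tlb_def by (rule hdb_rp rf_add rf_minus rf_mult rf_div rf_mod rf_power rf_if rf_Suc rf_const rf_proj rp_eq rp_less rp_le rp_not rp_and rp_or rp_const rp_even | (simp; fail))+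

lemma tlb_rf: "rec_fn k a0 \<Longrightarrow> rec_fn k (\<lambda>xs. tlb (a0 xs))"
  using rf_compL[OF tlb_base, of "[a0]" k] by simp

lemma itlb_base: "rec_fn 2 (\<lambda>xs. itlb (xs!0) (xs!1))"
  by (rule rf_cong[OF rf_prim[where b="\<lambda>xs. xs!1" and s="\<lambda>zs. tlb (zs!1)" and g="\<lambda>xs. xs!0"]])
     ((rule tlb_rf hdb_rp rf_add rf_minus rf_mult rf_div rf_mod rf_power rf_if rf_Suc rf_const rf_proj rp_eq rp_less rp_le rp_not rp_and rp_or rp_const rp_even | (simp; fail))+, (simp add: nth_Cons' itlb_def cong: if_cong)?, (auto)?)

lemma itlb_rf: "rec_fn k a0 \<Longrightarrow> rec_fn k a1 \<Longrightarrow> rec_fn k (\<lambda>xs. itlb (a0 xs) (a1 xs))"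
  using rf_compL[OF itlb_base, of "[a0,a1]" k] by simp

lemma bitat_base: "rec_pred 2 (\<lambda>xs. bitat (xs!0) (xs!1))"
  unfolding bitat_def by (rule itlb_rf tlb_rf hdb_rp rf_add rf_minus rf_mult rf_div rf_mod rf_power rf_if rf_Suc rf_const rf_proj rp_eq rp_less rp_le rp_not rp_and rp_or rp_const rp_even | (simp; fail))+

lemma bitat_rp: "rec_fn k a0 \<Longrightarrow> rec_fn k a1 \<Longrightarrow> rec_pred k (\<lambda>xs. bitat (a0 xs) (a1 xs))"
  using rf_compL[OF bitat_base[unfolded rec_pred_def], of "[a0,a1]" k] by (simp add: rec_pred_def)

lemma binv_base: "rec_fn 2 (\<lambda>xs. binv (xs!0) (xs!1))"
  unfolding binv_def
  by (rule rf_cong[OF rf_sum[where h="\<lambda>ys. if bitat (ys!1) (ys!0) then 2^(ys!0) else 0" and g="\<lambda>xs. xs!1"]])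
     ((rule bitat_rp itlb_rf tlb_rf hdb_rp rf_add rf_minus rf_mult rf_div rf_mod rf_power rf_if rf_Suc rf_const rf_proj rp_eq rp_less rp_le rp_not rp_and rp_or rp_const rp_even | (simp; fail))+, (simp add: nth_Cons' cong: if_cong)?, (auto)?)

lemma binv_rf: "rec_fn k a0 \<Longrightarrow> rec_fn k a1 \<Longrightarrow> rec_fn k (\<lambda>xs. binv (a0 xs) (a1 xs))"
  using rf_compL[OF binv_base, of "[a0,a1]" k] by simp

lemma wd_base: "rec_fn 1 (\<lambda>xs. wd (xs!0))"
  unfolding wd_def
proof (rule rf_cong[OF rp_least[where P="\<lambda>zs. zs!1 < 2^(zs!0)"]])
  show "rec_pred (Suc 1) (\<lambda>zs. zs!1 < 2^(zs!0))" by (rule binv_rf bitat_rp itlb_rf tlb_rf hdb_rp rf_add rf_minus rf_mult rf_div rf_mod rf_power rf_if rf_Suc rf_const rf_proj rp_eq rp_less rp_le rp_not rp_and rp_or rp_const rp_even | (simp; fail))+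
  fix xs :: "nat list" assume "length xs = 1"
  show "\<exists>x. (\<lambda>zs. zs!1 < 2^(zs!0)) (x#xs)" by (rule exI[of _ "xs!0"]) simp
qed (simp add: nth_Cons')

lemma wd_rf: "rec_fn k a0 \<Longrightarrow> rec_fn k (\<lambda>xs. wd (a0 xs))"
  using rf_compL[OF wd_base, of "[a0]" k] by simp

lemma qd_base: "rec_fn 1 (\<lambda>xs. qd (xs!0))"
  unfolding qd_def by (rule wd_rf binv_rf bitat_rp itlb_rf tlb_rf hdb_rp rf_add rf_minus rf_mult rf_div rf_mod rf_power rf_if rf_Suc rf_const rf_proj rp_eq rp_less rp_le rp_not rp_and rp_or rp_const rp_even | (simp; fail))+

lemma qd_rf: "rec_fn k a0 \<Longrightarrow> rec_fn k (\<lambda>xs. qd (a0 xs))"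
  using rf_compL[OF qd_base, of "[a0]" k] by simp

lemma Md_base: "rec_fn 1 (\<lambda>xs. Md (xs!0))"
  unfolding Md_def by (rule qd_rf wd_rf binv_rf bitat_rp itlb_rf tlb_rf hdb_rp rf_add rf_minus rf_mult rf_div rf_mod rf_power rf_if rf_Suc rf_const rf_proj rp_eq rp_less rp_le rp_not rp_and rp_or rp_const rp_even | (simp; fail))+

lemma Md_rf: "rec_fn k a0 \<Longrightarrow> rec_fn k (\<lambda>xs. Md (a0 xs))"
  using rf_compL[OF Md_base, of "[a0]" k] by simp

lemma Ld_base: "rec_fn 1 (\<lambda>xs. Ld (xs!0))"
  unfolding Ld_def by (rule Md_rf qd_rf wd_rf binv_rf bitat_rp itlb_rf tlb_rf hdb_rp rf_add rf_minus rf_mult rf_div rf_mod rf_power rf_if rf_Suc rf_const rf_proj rp_eq rp_less rp_le rp_not rp_and rp_or rp_const rp_even | (simp; fail))+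

lemma Ld_rf: "rec_fn k a0 \<Longrightarrow> rec_fn k (\<lambda>xs. Ld (a0 xs))"
  using rf_compL[OF Ld_base, of "[a0]" k] by simp

lemma Nn_base: "rec_fn 1 (\<lambda>xs. Nn (xs!0))"
  unfolding Nn_def by (rule Ld_rf Md_rf qd_rf wd_rf binv_rf bitat_rp itlb_rf tlb_rf hdb_rp rf_add rf_minus rf_mult rf_div rf_mod rf_power rf_if rf_Suc rf_const rf_proj rp_eq rp_less rp_le rp_not rp_and rp_or rp_const rp_even | (simp; fail))+

lemma Nn_rf: "rec_fn k a0 \<Longrightarrow> rec_fn k (\<lambda>xs. Nn (a0 xs))"
  using rf_compL[OF Nn_base, of "[a0]" k] by simp

lemma start_base: "rec_fn 2 (\<lambda>xs. start (xs!0) (xs!1))"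
  unfolding start_def
  by (rule rf_cong[OF rf_sum[where h="\<lambda>ys. if ys!0 = 0 then 0 else ys!1 - ys!0" and g="\<lambda>xs. xs!1"]])
     ((rule Nn_rf Ld_rf Md_rf qd_rf wd_rf binv_rf bitat_rp itlb_rf tlb_rf hdb_rp rf_add rf_minus rf_mult rf_div rf_mod rf_power rf_if rf_Suc rf_const rf_proj rp_eq rp_less rp_le rp_not rp_and rp_or rp_const rp_even | (simp; fail))+, (simp add: nth_Cons' cong: if_cong)?, (auto)?)

lemma start_rf: "rec_fn k a0 \<Longrightarrow> rec_fn k a1 \<Longrightarrow> rec_fn k (\<lambda>xs. start (a0 xs) (a1 xs))"
  using rf_compL[OF start_base, of "[a0,a1]" k] by simp

lemma sa_base: "rec_fn 2 (\<lambda>xs. sa (xs!0) (xs!1))"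
  unfolding sa_def
proof (rule rf_cong[OF rp_least[where P="\<lambda>zs. zs!1 \<le> zs!0 \<or> zs!2 < start (zs!1) (zs!0 + 1)"]])
  show "rec_pred (Suc 2) (\<lambda>zs. zs!1 \<le> zs!0 \<or> zs!2 < start (zs!1) (zs!0 + 1))" by (rule start_rf Nn_rf Ld_rf Md_rf qd_rf wd_rf binv_rf bitat_rp itlb_rf tlb_rf hdb_rp rf_add rf_minus rf_mult rf_div rf_mod rf_power rf_if rf_Suc rf_const rf_proj rp_eq rp_less rp_le rp_not rp_and rp_or rp_const rp_even | (simp; fail))+
  fix xs :: "nat list" assume "length xs = 2"
  show "\<exists>x. (\<lambda>zs. zs!1 \<le> zs!0 \<or> zs!2 < start (zs!1) (zs!0 + 1)) (x#xs)" by (rule exI[of _ "xs!0"]) simp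
qed (simp add: nth_Cons')

lemma sa_rf: "rec_fn k a0 \<Longrightarrow> rec_fn k a1 \<Longrightarrow> rec_fn k (\<lambda>xs. sa (a0 xs) (a1 xs))"
  using rf_compL[OF sa_base, of "[a0,a1]" k] by simp

lemma sb_base: "rec_fn 2 (\<lambda>xs. sb (xs!0) (xs!1))"
  unfolding sb_def by (rule sa_rf start_rf Nn_rf Ld_rf Md_rf qd_rf wd_rf binv_rf bitat_rp itlb_rf tlb_rf hdb_rp rf_add rf_minus rf_mult rf_div rf_mod rf_power rf_if rf_Suc rf_const rf_proj rp_eq rp_less rp_le rp_not rp_and rp_or rp_const rp_even | (simp; fail))+

lemma sb_rf: "rec_fn k a0 \<Longrightarrow> rec_fn k a1 \<Longrightarrow> rec_fn k (\<lambda>xs. sb (a0 xs) (a1 xs))"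
  using rf_compL[OF sb_base, of "[a0,a1]" k] by simp

lemma inW_base: "rec_pred 4 (\<lambda>xs. inW (xs!0) (xs!1) (xs!2) (xs!3))"
  unfolding inW_def by (rule sb_rf sa_rf start_rf Nn_rf Ld_rf Md_rf qd_rf wd_rf binv_rf bitat_rp itlb_rf tlb_rf hdb_rp rf_add rf_minus rf_mult rf_div rf_mod rf_power rf_if rf_Suc rf_const rf_proj rp_eq rp_less rp_le rp_not rp_and rp_or rp_const rp_even | (simp; fail))+

lemma inW_rp: "rec_fn k a0 \<Longrightarrow> rec_fn k a1 \<Longrightarrow> rec_fn k a2 \<Longrightarrow> rec_fn k a3 \<Longrightarrow> rec_pred k (\<lambda>xs. inW (a0 xs) (a1 xs) (a2 xs) (a3 xs))"
  using rf_compL[OF inW_base[unfolded rec_pred_def], of "[a0,a1,a2,a3]" k] by (simp add: rec_pred_def)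

lemma spec_base: "rec_pred 5 (\<lambda>xs. spec (xs!0) (xs!1) (xs!2) (xs!3) (xs!4))"
  unfolding spec_def by (rule inW_rp sb_rf sa_rf start_rf Nn_rf Ld_rf Md_rf qd_rf wd_rf binv_rf bitat_rp itlb_rf tlb_rf hdb_rp rf_add rf_minus rf_mult rf_div rf_mod rf_power rf_if rf_Suc rf_const rf_proj rp_eq rp_less rp_le rp_not rp_and rp_or rp_const rp_even | (simp; fail))+

lemma spec_rp: "rec_fn k a0 \<Longrightarrow> rec_fn k a1 \<Longrightarrow> rec_fn k a2 \<Longrightarrow> rec_fn k a3 \<Longrightarrow> rec_fn k a4 \<Longrightarrow> rec_pred k (\<lambda>xs. spec (a0 xs) (a1 xs) (a2 xs) (a3 xs) (a4 xs))"
  using rf_compL[OF spec_base[unfolded rec_pred_def], of "[a0,a1,a2,a3,a4]" k] by (simp add: rec_pred_def)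

lemma dig_base: "rec_fn 2 (\<lambda>xs. dig (xs!0) (xs!1))"
  unfolding dig_def by (rule spec_rp inW_rp sb_rf sa_rf start_rf Nn_rf Ld_rf Md_rf qd_rf wd_rf binv_rf bitat_rp itlb_rf tlb_rf hdb_rp rf_add rf_minus rf_mult rf_div rf_mod rf_power rf_if rf_Suc rf_const rf_proj rp_eq rp_less rp_le rp_not rp_and rp_or rp_const rp_even | (simp; fail))+

lemma dig_rf: "rec_fn k a0 \<Longrightarrow> rec_fn k a1 \<Longrightarrow> rec_fn k (\<lambda>xs. dig (a0 xs) (a1 xs))"
  using rf_compL[OF dig_base, of "[a0,a1]" k] by simp

lemma sbit_base: "rec_pred 5 (\<lambda>xs. sbit (xs!0) (xs!1) (xs!2) (xs!3) (xs!4))"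
  unfolding sbit_def rec_pred_def
  by (rule rf_cong[where f="\<lambda>xs. if (xs!3 = xs!0 \<or> xs!3 = xs!1) then (if xs!3 = xs!0 then (if dig (xs!2) (xs!4) = 1 then 1 else 0) else (if dig (xs!2) (xs!4) = 2 then 1 else 0))
      else (if xs!4 = xs!0 then (if dig (xs!2) (xs!3) = 1 then 1 else 0) else (if dig (xs!2) (xs!3) = 2 then 1 else 0))"])
     ((rule dig_rf spec_rp inW_rp sb_rf sa_rf start_rf Nn_rf Ld_rf Md_rf qd_rf wd_rf binv_rf bitat_rp itlb_rf tlb_rf hdb_rp rf_add rf_minus rf_mult rf_div rf_mod rf_power rf_if rf_Suc rf_const rf_proj rp_eq rp_less rp_le rp_not rp_and rp_or rp_const rp_even | (simp; fail))+, (auto)?)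

lemma sbit_rp: "rec_fn k a0 \<Longrightarrow> rec_fn k a1 \<Longrightarrow> rec_fn k a2 \<Longrightarrow> rec_fn k a3 \<Longrightarrow> rec_fn k a4 \<Longrightarrow> rec_pred k (\<lambda>xs. sbit (a0 xs) (a1 xs) (a2 xs) (a3 xs) (a4 xs))"
  using rf_compL[OF sbit_base[unfolded rec_pred_def], of "[a0,a1,a2,a3,a4]" k] by (simp add: rec_pred_def)

lemma spi_base: "rec_pred 5 (\<lambda>xs. spi (xs!0) (xs!1) (xs!2) (xs!3) (xs!4))"
  unfolding spi_def by (rule sbit_rp dig_rf spec_rp inW_rp sb_rf sa_rf start_rf Nn_rf Ld_rf Md_rf qd_rf wd_rf binv_rf bitat_rp itlb_rf tlb_rf hdb_rp rf_add rf_minus rf_mult rf_div rf_mod rf_power rf_if rf_Suc rf_const rf_proj rp_eq rp_less rp_le rp_not rp_and rp_or rp_const rp_even | (simp; fail))+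

lemma spi_rp: "rec_fn k a0 \<Longrightarrow> rec_fn k a1 \<Longrightarrow> rec_fn k a2 \<Longrightarrow> rec_fn k a3 \<Longrightarrow> rec_fn k a4 \<Longrightarrow> rec_pred k (\<lambda>xs. spi (a0 xs) (a1 xs) (a2 xs) (a3 xs) (a4 xs))"
  using rf_compL[OF spi_base[unfolded rec_pred_def], of "[a0,a1,a2,a3,a4]" k] by (simp add: rec_pred_def)

lemma cnt_base: "rec_fn 5 (\<lambda>xs. cnt (xs!0) (xs!1) (xs!2) (xs!3) (xs!4))"
  unfolding cnt_def
  by (rule rf_cong[OF rf_sum[where h="\<lambda>ys. if spi (ys!1) (ys!2) (ys!3) (ys!4) (ys!0) then 1 else 0" and g="\<lambda>xs. xs!4"]])
     ((rule spi_rp sbit_rp dig_rf spec_rp inW_rp sb_rf sa_rf start_rf Nn_rf Ld_rf Md_rf qd_rf wd_rf binv_rf bitat_rp itlb_rf tlb_rf hdb_rp rf_add rf_minus rf_mult rf_div rf_mod rf_power rf_if rf_Suc rf_const rf_proj rp_eq rp_less rp_le rp_not rp_and rp_or rp_const rp_even | (simp; fail))+, (simp add: nth_Cons' cong: if_cong)?, (auto)?)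

lemma cnt_rf: "rec_fn k a0 \<Longrightarrow> rec_fn k a1 \<Longrightarrow> rec_fn k a2 \<Longrightarrow> rec_fn k a3 \<Longrightarrow> rec_fn k a4 \<Longrightarrow> rec_fn k (\<lambda>xs. cnt (a0 xs) (a1 xs) (a2 xs) (a3 xs) (a4 xs))"
  using rf_compL[OF cnt_base, of "[a0,a1,a2,a3,a4]" k] by simp

lemma obit_base: "rec_pred 7 (\<lambda>xs. obit (xs!0) (xs!1) (xs!2) (xs!3) (xs!4) (xs!5) (xs!6))"
  unfolding obit_def rec_pred_def
  by (rule rf_cong[where f="\<lambda>xs. if spi (xs!0) (xs!1) (xs!2) (xs!3) (xs!6) then (if sbit (xs!2) (xs!3) (xs!4) (sa (xs!0) (xs!6)) (sb (xs!0) (xs!6)) then 1 else 0)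
      else (if bitat (xs!5) (xs!6 - cnt (xs!0) (xs!1) (xs!2) (xs!3) (xs!6)) then 1 else 0)"])
     ((rule cnt_rf spi_rp sbit_rp dig_rf spec_rp inW_rp sb_rf sa_rf start_rf Nn_rf Ld_rf Md_rf qd_rf wd_rf binv_rf bitat_rp itlb_rf tlb_rf hdb_rp rf_add rf_minus rf_mult rf_div rf_mod rf_power rf_if rf_Suc rf_const rf_proj rp_eq rp_less rp_le rp_not rp_and rp_or rp_const rp_even | (simp; fail))+, (auto)?)

lemma obit_rp: "rec_fn k a0 \<Longrightarrow> rec_fn k a1 \<Longrightarrow> rec_fn k a2 \<Longrightarrow> rec_fn k a3 \<Longrightarrow> rec_fn k a4 \<Longrightarrow> rec_fn k a5 \<Longrightarrow> rec_fn k a6 \<Longrightarrow> rec_pred k (\<lambda>xs. obit (a0 xs) (a1 xs) (a2 xs) (a3 xs) (a4 xs) (a5 xs) (a6 xs))"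
  using rf_compL[OF obit_base[unfolded rec_pred_def], of "[a0,a1,a2,a3,a4,a5,a6]" k] by (simp add: rec_pred_def)

lemma outacc_base: "rec_fn 8 (\<lambda>xs. outacc (xs!0) (xs!1) (xs!2) (xs!3) (xs!4) (xs!5) (xs!6) (xs!7))"
  by (rule rf_cong[OF rf_prim[where b="\<lambda>xs. 0" and g="\<lambda>xs. xs!7" and
       s="\<lambda>zs. 2 * zs!1 + (if obit (zs!2) (zs!3) (zs!4) (zs!5) (zs!6) (zs!7) (zs!8 - 1 - zs!0) then 2 else 1)"]])
     ((rule obit_rp cnt_rf spi_rp sbit_rp dig_rf spec_rp inW_rp sb_rf sa_rf start_rf Nn_rf Ld_rf Md_rf qd_rf wd_rf binv_rf bitat_rp itlb_rf tlb_rf hdb_rp rf_add rf_minus rf_mult rf_div rf_mod rf_power rf_if rf_Suc rf_const rf_proj rp_eq rp_less rp_le rp_not rp_and rp_or rp_const rp_even | (simp; fail))+, (simp add: nth_Cons' outacc_def cong: if_cong)?, (auto)?)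

lemma outacc_rf: "rec_fn k a0 \<Longrightarrow> rec_fn k a1 \<Longrightarrow> rec_fn k a2 \<Longrightarrow> rec_fn k a3 \<Longrightarrow> rec_fn k a4 \<Longrightarrow> rec_fn k a5 \<Longrightarrow> rec_fn k a6 \<Longrightarrow> rec_fn k a7 \<Longrightarrow> rec_fn k (\<lambda>xs. outacc (a0 xs) (a1 xs) (a2 xs) (a3 xs) (a4 xs) (a5 xs) (a6 xs) (a7 xs))"
  using rf_compL[OF outacc_base, of "[a0,a1,a2,a3,a4,a5,a6,a7]" k] by simp

lemma decF_base: "rec_fn 2 (\<lambda>xs. decF (xs!0) (xs!1))"
  unfolding decF_def by (rule outacc_rf obit_rp cnt_rf spi_rp sbit_rp dig_rf spec_rp inW_rp sb_rf sa_rf start_rf Nn_rf Ld_rf Md_rf qd_rf wd_rf binv_rf bitat_rp itlb_rf tlb_rf hdb_rp rf_add rf_minus rf_mult rf_div rf_mod rf_power rf_if rf_Suc rf_const rf_proj rp_eq rp_less rp_le rp_not rp_and rp_or rp_const rp_even | (simp; fail))+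

lemma decF_rf: "rec_fn k a0 \<Longrightarrow> rec_fn k a1 \<Longrightarrow> rec_fn k (\<lambda>xs. decF (a0 xs) (a1 xs))"
  using rf_compL[OF decF_base, of "[a0,a1]" k] by simp

lemma tri_base: "rec_fn 1 (\<lambda>xs. tri (xs!0))"
  unfolding tri_def by (rule decF_rf outacc_rf obit_rp cnt_rf spi_rp sbit_rp dig_rf spec_rp inW_rp sb_rf sa_rf start_rf Nn_rf Ld_rf Md_rf qd_rf wd_rf binv_rf bitat_rp itlb_rf tlb_rf hdb_rp rf_add rf_minus rf_mult rf_div rf_mod rf_power rf_if rf_Suc rf_const rf_proj rp_eq rp_less rp_le rp_not rp_and rp_or rp_const rp_even | (simp; fail))+

lemma tri_rf: "rec_fn k a0 \<Longrightarrow> rec_fn k (\<lambda>xs. tri (a0 xs))"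
  using rf_compL[OF tri_base, of "[a0]" k] by simp

lemma ps_base: "rec_fn 1 (\<lambda>xs. ps (xs!0))"
  unfolding ps_def
proof (rule rf_cong[OF rp_least[where P="\<lambda>zs. zs!1 < tri (zs!0 + 1)"]])
  show "rec_pred (Suc 1) (\<lambda>zs. zs!1 < tri (zs!0 + 1))" by (rule tri_rf decF_rf outacc_rf obit_rp cnt_rf spi_rp sbit_rp dig_rf spec_rp inW_rp sb_rf sa_rf start_rf Nn_rf Ld_rf Md_rf qd_rf wd_rf binv_rf bitat_rp itlb_rf tlb_rf hdb_rp rf_add rf_minus rf_mult rf_div rf_mod rf_power rf_if rf_Suc rf_const rf_proj rp_eq rp_less rp_le rp_not rp_and rp_or rp_const rp_even | (simp; fail))+
  fix xs :: "nat list" assume "length xs = 1"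
  show "\<exists>x. (\<lambda>zs. zs!1 < tri (zs!0 + 1)) (x#xs)" by (rule exI[of _ "xs!0"]) (use tri_gt[of "xs!0"] in simp)
qed (simp add: nth_Cons')

lemma ps_rf: "rec_fn k a0 \<Longrightarrow> rec_fn k (\<lambda>xs. ps (a0 xs))"
  using rf_compL[OF ps_base, of "[a0]" k] by simp

lemma pfst_base: "rec_fn 1 (\<lambda>xs. pfst (xs!0))"
  unfolding pfst_def by (rule ps_rf tri_rf decF_rf outacc_rf obit_rp cnt_rf spi_rp sbit_rp dig_rf spec_rp inW_rp sb_rf sa_rf start_rf Nn_rf Ld_rf Md_rf qd_rf wd_rf binv_rf bitat_rp itlb_rf tlb_rf hdb_rp rf_add rf_minus rf_mult rf_div rf_mod rf_power rf_if rf_Suc rf_const rf_proj rp_eq rp_less rp_le rp_not rp_and rp_or rp_const rp_even | (simp; fail))+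

lemma pfst_rf: "rec_fn k a0 \<Longrightarrow> rec_fn k (\<lambda>xs. pfst (a0 xs))"
  using rf_compL[OF pfst_base, of "[a0]" k] by simp

lemma psnd_base: "rec_fn 1 (\<lambda>xs. psnd (xs!0))"
  unfolding psnd_def by (rule pfst_rf ps_rf tri_rf decF_rf outacc_rf obit_rp cnt_rf spi_rp sbit_rp dig_rf spec_rp inW_rp sb_rf sa_rf start_rf Nn_rf Ld_rf Md_rf qd_rf wd_rf binv_rf bitat_rp itlb_rf tlb_rf hdb_rp rf_add rf_minus rf_mult rf_div rf_mod rf_power rf_if rf_Suc rf_const rf_proj rp_eq rp_less rp_le rp_not rp_and rp_or rp_const rp_even | (simp; fail))+

lemma psnd_rf: "rec_fn k a0 \<Longrightarrow> rec_fn k (\<lambda>xs. psnd (a0 xs))"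
  using rf_compL[OF psnd_base, of "[a0]" k] by simp

lemma ltl_base: "rec_fn 1 (\<lambda>xs. ltl (xs!0))"
  unfolding ltl_def by (rule psnd_rf pfst_rf ps_rf tri_rf decF_rf outacc_rf obit_rp cnt_rf spi_rp sbit_rp dig_rf spec_rp inW_rp sb_rf sa_rf start_rf Nn_rf Ld_rf Md_rf qd_rf wd_rf binv_rf bitat_rp itlb_rf tlb_rf hdb_rp rf_add rf_minus rf_mult rf_div rf_mod rf_power rf_if rf_Suc rf_const rf_proj rp_eq rp_less rp_le rp_not rp_and rp_or rp_const rp_even | (simp; fail))+

lemma ltl_rf: "rec_fn k a0 \<Longrightarrow> rec_fn k (\<lambda>xs. ltl (a0 xs))"
  using rf_compL[OF ltl_base, of "[a0]" k] by simp

lemma lhd_base: "rec_fn 1 (\<lambda>xs. lhd (xs!0))"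
  unfolding lhd_def by (rule ltl_rf psnd_rf pfst_rf ps_rf tri_rf decF_rf outacc_rf obit_rp cnt_rf spi_rp sbit_rp dig_rf spec_rp inW_rp sb_rf sa_rf start_rf Nn_rf Ld_rf Md_rf qd_rf wd_rf binv_rf bitat_rp itlb_rf tlb_rf hdb_rp rf_add rf_minus rf_mult rf_div rf_mod rf_power rf_if rf_Suc rf_const rf_proj rp_eq rp_less rp_le rp_not rp_and rp_or rp_const rp_even | (simp; fail))+

lemma lhd_rf: "rec_fn k a0 \<Longrightarrow> rec_fn k (\<lambda>xs. lhd (a0 xs))"
  using rf_compL[OF lhd_base, of "[a0]" k] by simp

lemma itl_base: "rec_fn 2 (\<lambda>xs. itl (xs!0) (xs!1))"
  by (rule rf_cong[OF rf_prim[where b="\<lambda>xs. xs!1" and s="\<lambda>zs. ltl (zs!1)" and g="\<lambda>xs. xs!0"]])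
     ((rule lhd_rf ltl_rf psnd_rf pfst_rf ps_rf tri_rf decF_rf outacc_rf obit_rp cnt_rf spi_rp sbit_rp dig_rf spec_rp inW_rp sb_rf sa_rf start_rf Nn_rf Ld_rf Md_rf qd_rf wd_rf binv_rf bitat_rp itlb_rf tlb_rf hdb_rp rf_add rf_minus rf_mult rf_div rf_mod rf_power rf_if rf_Suc rf_const rf_proj rp_eq rp_less rp_le rp_not rp_and rp_or rp_const rp_even | (simp; fail))+, (simp add: nth_Cons' itl_def cong: if_cong)?, (auto)?)

lemma itl_rf: "rec_fn k a0 \<Longrightarrow> rec_fn k a1 \<Longrightarrow> rec_fn k (\<lambda>xs. itl (a0 xs) (a1 xs))"
  using rf_compL[OF itl_base, of "[a0,a1]" k] by simp

lemma tb_base: "rec_pred 2 (\<lambda>xs. tb (xs!0) (xs!1))"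
  unfolding tb_def by (rule itl_rf lhd_rf ltl_rf psnd_rf pfst_rf ps_rf tri_rf decF_rf outacc_rf obit_rp cnt_rf spi_rp sbit_rp dig_rf spec_rp inW_rp sb_rf sa_rf start_rf Nn_rf Ld_rf Md_rf qd_rf wd_rf binv_rf bitat_rp itlb_rf tlb_rf hdb_rp rf_add rf_minus rf_mult rf_div rf_mod rf_power rf_if rf_Suc rf_const rf_proj rp_eq rp_less rp_le rp_not rp_and rp_or rp_const rp_even | (simp; fail))+

lemma tb_rp: "rec_fn k a0 \<Longrightarrow> rec_fn k a1 \<Longrightarrow> rec_pred k (\<lambda>xs. tb (a0 xs) (a1 xs))"
  using rf_compL[OF tb_base[unfolded rec_pred_def], of "[a0,a1]" k] by (simp add: rec_pred_def)

lemma find1_base: "rec_fn 2 (\<lambda>xs. find1 (xs!0) (xs!1))"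
  unfolding find1_def
proof (rule rf_cong[OF rp_least[where P="\<lambda>zs. itl (zs!0) (zs!1) = 0 \<or> lhd (itl (zs!0) (zs!1)) = zs!2"]])
  show "rec_pred (Suc 2) (\<lambda>zs. itl (zs!0) (zs!1) = 0 \<or> lhd (itl (zs!0) (zs!1)) = zs!2)" by (rule tb_rp itl_rf lhd_rf ltl_rf psnd_rf pfst_rf ps_rf tri_rf decF_rf outacc_rf obit_rp cnt_rf spi_rp sbit_rp dig_rf spec_rp inW_rp sb_rf sa_rf start_rf Nn_rf Ld_rf Md_rf qd_rf wd_rf binv_rf bitat_rp itlb_rf tlb_rf hdb_rp rf_add rf_minus rf_mult rf_div rf_mod rf_power rf_if rf_Suc rf_const rf_proj rp_eq rp_less rp_le rp_not rp_and rp_or rp_const rp_even | (simp; fail))+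
  fix xs :: "nat list" assume "length xs = 2"
  show "\<exists>x. (\<lambda>zs. itl (zs!0) (zs!1) = 0 \<or> lhd (itl (zs!0) (zs!1)) = zs!2) (x#xs)" by (rule exI[of _ "xs!0"]) (simp add: itl_self)
qed (simp add: nth_Cons')

lemma find1_rf: "rec_fn k a0 \<Longrightarrow> rec_fn k a1 \<Longrightarrow> rec_fn k (\<lambda>xs. find1 (a0 xs) (a1 xs))"
  using rf_compL[OF find1_base, of "[a0,a1]" k] by simp

lemma find2_base: "rec_fn 2 (\<lambda>xs. find2 (xs!0) (xs!1))"
  unfolding find2_def
proof (rule rf_cong[OF rp_least[where P="\<lambda>zs. itl (zs!0) (zs!1) = 0 \<or> tb (psnd (zs!2)) (pfst (lhd (itl (zs!0) (zs!1))))"]])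
  show "rec_pred (Suc 2) (\<lambda>zs. itl (zs!0) (zs!1) = 0 \<or> tb (psnd (zs!2)) (pfst (lhd (itl (zs!0) (zs!1)))))" by (rule find1_rf tb_rp itl_rf lhd_rf ltl_rf psnd_rf pfst_rf ps_rf tri_rf decF_rf outacc_rf obit_rp cnt_rf spi_rp sbit_rp dig_rf spec_rp inW_rp sb_rf sa_rf start_rf Nn_rf Ld_rf Md_rf qd_rf wd_rf binv_rf bitat_rp itlb_rf tlb_rf hdb_rp rf_add rf_minus rf_mult rf_div rf_mod rf_power rf_if rf_Suc rf_const rf_proj rp_eq rp_less rp_le rp_not rp_and rp_or rp_const rp_even | (simp; fail))+
  fix xs :: "nat list" assume "length xs = 2"
  show "\<exists>x. (\<lambda>zs. itl (zs!0) (zs!1) = 0 \<or> tb (psnd (zs!2)) (pfst (lhd (itl (zs!0) (zs!1))))) (x#xs)" by (rule exI[of _ "xs!0"]) (simp add: itl_self)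
qed (simp add: nth_Cons')

lemma find2_rf: "rec_fn k a0 \<Longrightarrow> rec_fn k a1 \<Longrightarrow> rec_fn k (\<lambda>xs. find2 (a0 xs) (a1 xs))"
  using rf_compL[OF find2_base, of "[a0,a1]" k] by simp

lemma Dn_base: "rec_fn 2 (\<lambda>xs. Dn (xs!0) (xs!1))"
  unfolding Dn_def by (rule find2_rf find1_rf tb_rp itl_rf lhd_rf ltl_rf psnd_rf pfst_rf ps_rf tri_rf decF_rf outacc_rf obit_rp cnt_rf spi_rp sbit_rp dig_rf spec_rp inW_rp sb_rf sa_rf start_rf Nn_rf Ld_rf Md_rf qd_rf wd_rf binv_rf bitat_rp itlb_rf tlb_rf hdb_rp rf_add rf_minus rf_mult rf_div rf_mod rf_power rf_if rf_Suc rf_const rf_proj rp_eq rp_less rp_le rp_not rp_and rp_or rp_const rp_even | (simp; fail))+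

lemma Dn_rf: "rec_fn k a0 \<Longrightarrow> rec_fn k a1 \<Longrightarrow> rec_fn k (\<lambda>xs. Dn (a0 xs) (a1 xs))"
  using rf_compL[OF Dn_base, of "[a0,a1]" k] by simp




section \<open>bit lists\<close>

lemma bl2n_Cons: "bl2n (x # xs) = 2 * bl2n xs + (if x then 2 else 1)"
  by (cases x) auto

lemma even_bl2n_Cons: "even (bl2n (x # xs)) \<longleftrightarrow> x"
  by (cases x) auto

lemma inj_bl2n: "inj bl2n"
proof (rule injI)
  fix xs ys :: "bool list" assume "bl2n xs = bl2n ys"
  then show "xs = ys"
  proof (induction xs arbitrary: ys)
    case Nil then show ?case by (cases ys) (auto simp: bl2n_Cons split: if_splits)
  next
    case (Cons x xs)
    show ?case
    proof (cases ys)
      case Nil then show ?thesis using Cons.prems by (auto simp: bl2n_Cons split: if_splits)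
    next
      case (Cons y ys')
      have "even (bl2n (x#xs)) = even (bl2n (y#ys'))" using Cons.prems[unfolded \<open>ys = y # ys'\<close>] by simp
      then have xy: "x = y" by (simp only: even_bl2n_Cons)
      then have "bl2n xs = bl2n ys'" using Cons.prems[unfolded \<open>ys = y # ys'\<close>] by (simp add: bl2n_Cons)
      then show ?thesis using Cons.IH xy \<open>ys = y # ys'\<close> by simp
    qed
  qed
qed

lemma surj_bl2n: "\<exists>xs. bl2n xs = m"
proof (induction m rule: less_induct)
  case (less m)
  show ?case
  proof (cases "m = 0")
    case True then show ?thesis by (rule_tac x="[]" in exI) simp
  next
    case False
    then have lt: "(m - 1) div 2 < m" by simp
    from less[OF lt] obtain xs where xs: "bl2n xs = (m - 1) div 2" by blast
    show ?thesis
    proof (cases "even m")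
      case True
      then obtain k where k: "m = 2 * k" by (rule evenE)
      with False have "k \<ge> 1" by simp
      then have "m = 2 * ((m - 1) div 2) + 2" using k by (cases k) auto
      then show ?thesis using xs by (rule_tac x="True # xs" in exI) (simp add: bl2n_Cons)
    next
      case odd: False
      then obtain k where k: "m = 2 * k + 1" by (rule oddE)
      then have "m = 2 * ((m - 1) div 2) + 1" by simp
      then show ?thesis using xs by (rule_tac x="False # xs" in exI) (simp add: bl2n_Cons)
    qed
  qed
qed

definition n2bl :: "nat \<Rightarrow> bool list" where "n2bl m = (SOME xs. bl2n xs = m)"

lemma bl2n_n2bl[simp]: "bl2n (n2bl m) = m"
  unfolding n2bl_def using surj_bl2n by (rule someI_ex)

lemma n2bl_bl2n[simp]: "n2bl (bl2n xs) = xs"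
  by (rule injD[OF inj_bl2n]) simp

lemma bl2n_eq_iff: "bl2n xs = bl2n ys \<longleftrightarrow> xs = ys"
  using inj_bl2n by (auto dest: injD)

lemma bl2n_lower: "2 ^ length xs \<le> bl2n xs + 1"
  by (induction xs) (auto simp: bl2n_Cons)

lemma length_n2bl: "2 ^ length (n2bl z) \<le> z + 1"
  using bl2n_lower[of "n2bl z"] by simp

lemma hdb_bl2n: "hdb (bl2n xs) \<longleftrightarrow> xs \<noteq> [] \<and> hd xs"
  by (cases xs) (auto simp: hdb_def bl2n_Cons)

lemma tlb_bl2n: "tlb (bl2n xs) = bl2n (tl xs)"
  by (cases xs) (auto simp: tlb_def bl2n_Cons)

lemma itlb_bl2n: "itlb i (bl2n xs) = bl2n (drop i xs)"
  by (induction i) (auto simp: itlb_def tlb_bl2n drop_Suc tl_drop)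

lemma bitat_bl2n: "bitat (bl2n xs) k \<longleftrightarrow> k < length xs \<and> xs ! k"
  by (auto simp: bitat_def itlb_bl2n hdb_bl2n hd_drop_conv_nth)

definition bits :: "nat \<Rightarrow> nat \<Rightarrow> bool list" where
  "bits X L = map (\<lambda>i. odd (X div 2^i)) [0..<L]"

lemma sum_bits: "X < 2^L \<Longrightarrow> (\<Sum>i<L. if odd (X div 2^i) then 2^i else 0) = (X::nat)"
proof (induction L arbitrary: X)
  case 0 then show ?case by simp
next
  case (Suc L)
  have "X < 2^L * 2" using Suc.prems by simp
  then have h: "X div 2 < 2^L" by (rule less_mult_imp_div_less)
  have "(\<Sum>i<Suc L. if odd (X div 2^i) then 2^i else 0) =
        (if odd X then 1 else 0) + (\<Sum>i<L. if odd (X div 2^Suc i) then 2^Suc i else 0)"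
    by (subst sum.lessThan_Suc_shift) simp
  also have "(\<Sum>i<L. if odd (X div 2^Suc i) then 2^Suc i else (0::nat)) =
             2 * (\<Sum>i<L. if odd ((X div 2) div 2^i) then 2^i else 0)"
    unfolding sum_distrib_left by (rule sum.cong) (auto simp: div_mult2_eq)
  also have "\<dots> = 2 * (X div 2)" using Suc.IH[OF h] by simp
  finally have "(\<Sum>i<Suc L. if odd (X div 2^i) then 2^i else 0) = (if odd X then 1 else 0) + 2 * (X div 2)" .
  moreover have "(if odd X then 1 else 0) + 2 * (X div 2) = X"
  proof (cases "odd X")
    case True then show ?thesis using odd_two_times_div_two_succ[of X] by simp
  next
    case False then show ?thesis using even_two_times_div_two[of X] by simp
  qed
  ultimately show ?case by simp
qed


lemma binv_bits:
  assumes "X < 2^L" shows "binv (bl2n (bits X L @ rest)) L = X"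
proof -
  have "\<And>i. i < L \<Longrightarrow> bitat (bl2n (bits X L @ rest)) i = odd (X div 2^i)"
    by (simp add: bitat_bl2n bits_def nth_append)
  then have "binv (bl2n (bits X L @ rest)) L = (\<Sum>i<L. if odd (X div 2^i) then 2^i else 0)"
    unfolding binv_def by (intro sum.cong) auto
  then show ?thesis using sum_bits[OF assms] by simp
qed

lemma itlb_bits: "itlb L (bl2n (bits X L @ rest)) = bl2n rest"
  by (simp add: itlb_bl2n bits_def)

section \<open>digits\<close>

lemma digit_sum:
  assumes "\<And>w. d w < B" "1 < (B::nat)"
  shows "(\<Sum>w<K. d w * B^w) div B^j mod B = (if j < K then d j else 0)"
  using assms(1)
proof (induction K arbitrary: d j)
  case 0 then show ?case by simp
next
  case (Suc K)
  have S: "(\<Sum>w<Suc K. d w * B^w) = d 0 + B * (\<Sum>w<K. d (Suc w) * B^w)"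
    by (subst sum.lessThan_Suc_shift) (simp add: sum_distrib_left ac_simps)
  show ?case
  proof (cases j)
    case 0
    then show ?thesis using S Suc.prems[of 0] by simp
  next
    case (Suc j')
    have "(d 0 + B * (\<Sum>w<K. d (Suc w) * B^w)) div B = (\<Sum>w<K. d (Suc w) * B^w)"
      using Suc.prems[of 0] assms(2) by simp
    then have "(\<Sum>w<Suc K. d w * B^w) div B^j = (\<Sum>w<K. d (Suc w) * B^w) div B^j'"
      using S Suc by (simp add: div_mult2_eq)
    then show ?thesis using Suc.IH[of "\<lambda>w. d (Suc w)" j'] Suc.prems Suc by simp
  qed
qed

section \<open>pairing\<close>

lemma tri_triangle: "tri = triangle"
  by (rule ext) (simp add: tri_def triangle_def)

lemma triangle_mono: "s \<le> t \<Longrightarrow> triangle s \<le> triangle t"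
  by (induction t rule: dec_induct) auto

lemma ps_pfst_psnd: "pfst z = fst (prod_decode z) \<and> psnd z = snd (prod_decode z)"
proof -
  obtain a b where ab: "prod_decode z = (a, b)" by (cases "prod_decode z")
  then have z: "z = triangle (a+b) + a"
    using prod_decode_inverse[of z] ab by (simp add: prod_encode_def)
  have "ps z = a + b"
    unfolding ps_def tri_triangle
  proof (rule Least_equality)
    show "z < triangle (a + b + 1)" using z by simp
    fix s assume "z < triangle (s + 1)"
    show "a + b \<le> s"
    proof (rule ccontr)
      assume "\<not> a + b \<le> s"
      then have "triangle (s+1) \<le> triangle (a+b)" by (intro triangle_mono) simp
      with \<open>z < triangle (s + 1)\<close> z show False by simp
    qed
  qed
  then show ?thesis using z ab by (simp add: pfst_def psnd_def tri_triangle)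
qed

lemma pfst_enc[simp]: "pfst (prod_encode (a,b)) = a" and psnd_enc[simp]: "psnd (prod_encode (a,b)) = b"
  using ps_pfst_psnd[of "prod_encode (a,b)"] by auto

lemma ltl_enc[simp]: "ltl (list_encode (x#xs)) = list_encode xs"
  by (simp add: ltl_def)
lemma lhd_enc[simp]: "lhd (list_encode (x#xs)) = x"
  by (simp add: lhd_def)
lemma ltl_0[simp]: "ltl 0 = 0"
proof -
  have "prod_encode (0,0) = 0" by (simp add: prod_encode_def)
  then show ?thesis unfolding ltl_def using psnd_enc[of 0 0] by simp
qed

lemma itl_enc: "itl i (list_encode xs) = list_encode (drop i xs)"
proof (induction i arbitrary: xs)
  case 0 then show ?case by (simp add: itl_def)
next
  case (Suc i)
  have "itl (Suc i) (list_encode xs) = ltl (itl i (list_encode xs))" by (simp add: itl_def)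
  also have "\<dots> = ltl (list_encode (drop i xs))" using Suc by simp
  also have "\<dots> = list_encode (drop (Suc i) xs)"
  proof -
    have d: "drop (Suc i) xs = tl (drop i xs)" by (simp add: drop_Suc tl_drop)
    show ?thesis unfolding d by (cases "drop i xs") (simp, simp add: ltl_def)
  qed
  finally show ?case .
qed

lemma list_encode_0: "list_encode xs = 0 \<longleftrightarrow> xs = []"
  by (cases xs) auto

lemma lhd_itl: "i < length xs \<Longrightarrow> lhd (itl i (list_encode xs)) = xs ! i"
proof -
  assume "i < length xs"
  then have d: "drop i xs = xs!i # drop (Suc i) xs" by (rule Cons_nth_drop_Suc[symmetric])
  show ?thesis unfolding itl_enc d by (simp only: lhd_enc)
qed

lemma least_bounded:
  fixes len :: nat
  assumes "\<exists>i<len. P i"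
  shows "(LEAST i. len \<le> i \<or> P i) < len \<and> P (LEAST i. len \<le> i \<or> P i)"
proof -
  from assms obtain i where i: "i < len" "P i" by blast
  let ?L = "LEAST i. len \<le> i \<or> P i"
  have le: "?L \<le> i" by (rule Least_le) (use i in simp)
  have h: "len \<le> ?L \<or> P ?L" by (rule LeastI[of _ i]) (use i in simp)
  from le i have "?L < len" by linarith
  with h show ?thesis by linarith
qed

lemma least_bounded_none:
  fixes len :: nat
  assumes "\<not> (\<exists>i<len. P i)"
  shows "(LEAST i. len \<le> i \<or> P i) = len"
  by (rule Least_equality) (use assms in \<open>auto simp: not_less[symmetric]\<close>)




definition row :: "nat \<Rightarrow> nat \<Rightarrow> (nat \<times> nat) list" where
  "row n a = map (\<lambda>j. (a, j)) [Suc a..<Suc n]"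

lemma edge_slots_row: "edge_slots n = concat (map (row n) [1..<Suc n])"
  unfolding edge_slots_def row_def by simp

lemma length_row[simp]: "length (row n a) = n - a"
  by (simp add: row_def del: upt_Suc)

lemma start_Suc: "start n (Suc a) = start n a + (if a = 0 then 0 else n - a)"
  by (simp add: start_def)

lemma start_0[simp]: "start n 0 = 0" by (simp add: start_def)

lemma len_prefix: "length (concat (map (row n) [1..<a])) = start n a"
proof (induction a)
  case 0 then show ?case by simp
next
  case (Suc a)
  show ?case
  proof (cases "a = 0")
    case True then show ?thesis by (simp add: start_def)
  next
    case False
    then have "[1..<Suc a] = [1..<a] @ [a]" by simp
    then show ?thesis using Suc False by (simp add: start_Suc)
  qed
qed

lemma start_mono: assumes "a \<le> b" shows "start n a \<le> start n b"
  using assms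
proof (induction b)
  case 0 then show ?case by simp
next
  case (Suc b)
  show ?case
  proof (cases "a = Suc b")
    case False
    then have "a \<le> b" using Suc.prems by simp
    then show ?thesis using Suc.IH by (simp add: start_Suc)
  qed simp
qed

lemma T_gauss: "(\<Sum>j<n. n - j) = n * (n + 1) div (2::nat)"
proof (induction n)
  case 0 then show ?case by simp
next
  case (Suc n)
  have "(\<Sum>j<Suc n. Suc n - j) = Suc n + (\<Sum>j<n. Suc n - Suc j)"
    by (subst sum.lessThan_Suc_shift) simp
  also have "(\<Sum>j<n. Suc n - Suc j) = (\<Sum>j<n. n - j)" by simp
  finally show ?case using Suc by simp
qed

lemma start_diag: "start n n = Nn n"
proof (cases n)
  case 0 then show ?thesis by (simp add: Nn_def)
next
  case (Suc m)
  have "start n n = (\<Sum>j<Suc m. if j = 0 then 0 else Suc m - j)" by (simp add: start_def Suc)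
  also have "\<dots> = (\<Sum>j<m. m - j)" by (subst sum.lessThan_Suc_shift) simp
  also have "\<dots> = m * (m+1) div 2" by (rule T_gauss)
  finally show ?thesis by (simp add: Nn_def Suc mult.commute)
qed

lemma length_edge_slots: "length (edge_slots n) = Nn n"
proof -
  have "length (edge_slots n) = start n (Suc n)"
    unfolding edge_slots_row by (simp add: len_prefix[symmetric] length_concat)
  also have "\<dots> = start n n" by (simp add: start_Suc)
  finally show ?thesis by (simp add: start_diag)
qed

lemma edge_slots_split: "1 \<le> a \<Longrightarrow> a \<le> n \<Longrightarrow>
   edge_slots n = concat (map (row n) [1..<a]) @ row n a @ concat (map (row n) [Suc a..<Suc n])"
proof -
  assume a: "1 \<le> a" "a \<le> n"
  have "[1..<Suc n] = [1..<a] @ [a..<Suc n]" using a by (metis le_SucI le_add_diff_inverse upt_add_eq_append)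
  also have "[a..<Suc n] = a # [Suc a..<Suc n]" using a by (simp add: upt_conv_Cons)
  finally show ?thesis unfolding edge_slots_row by simp
qed

lemma sa_props:
  assumes "i < Nn n"
  shows "1 \<le> sa n i \<and> sa n i < n \<and> start n (sa n i) \<le> i \<and> i < start n (Suc (sa n i))"
proof -
  let ?P = "\<lambda>x. n \<le> x \<or> i < start n (x+1)"
  have n1: "n \<ge> 1" using assms by (cases n) (auto simp: Nn_def)
  have Pn: "?P (n - 1)" using assms n1 by (simp add: start_diag)
  have le: "sa n i \<le> n - 1" unfolding sa_def by (rule Least_le) (rule Pn)
  have P: "?P (sa n i)" unfolding sa_def by (rule LeastI) (rule Pn)
  have lt: "sa n i < n" using le n1 by simp
  then have i1: "i < start n (Suc (sa n i))" using P by simp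
  have nz: "sa n i \<noteq> 0"
  proof
    assume "sa n i = 0" then show False using i1 by (simp add: start_Suc)
  qed
  have "\<not> ?P (sa n i - 1)" unfolding sa_def by (rule not_less_Least) (use nz in \<open>simp add: sa_def\<close>)
  then have "start n (sa n i) \<le> i" using nz by simp
  then show ?thesis using nz lt i1 by simp
qed

lemma edge_slots_nth:
  assumes "i < Nn n"
  shows "edge_slots n ! i = (sa n i, sb n i)"
proof -
  let ?a = "sa n i"
  have p: "1 \<le> ?a" "?a < n" "start n ?a \<le> i" "i < start n (Suc ?a)" using sa_props[OF assms] by auto
  have off: "i - start n ?a < n - ?a" using p by (simp add: start_Suc)
  let ?pre = "concat (map (row n) [1..<?a])" and ?post = "row n ?a @ concat (map (row n) [Suc ?a..<Suc n])"
  have sp: "edge_slots n = ?pre @ ?post" using edge_slots_split[of ?a n] p by simp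
  have li: "i = length ?pre + (i - start n ?a)" using p len_prefix[of n ?a] by simp
  have "edge_slots n ! i = (?pre @ ?post) ! (length ?pre + (i - start n ?a))"
    using sp li by metis
  also have "\<dots> = ?post ! (i - start n ?a)" by (rule nth_append_length_plus)
  also have "\<dots> = row n ?a ! (i - start n ?a)" using off by (simp add: nth_append)
  also have "\<dots> = (?a, Suc ?a + (i - start n ?a))" using off by (simp add: row_def del: upt_Suc)
  finally show ?thesis by (simp add: sb_def)
qed

lemma sb_props: "i < Nn n \<Longrightarrow> sa n i < sb n i \<and> sb n i \<le> n"
  using sa_props[of i n] by (auto simp: sb_def start_Suc)

lemma distinct_edge_slots: "distinct (edge_slots n)"
proof (subst distinct_conv_nth, intro allI impI)
  fix i j assume ij: "i < length (edge_slots n)" "j < length (edge_slots n)" "i \<noteq> j"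
  show "edge_slots n ! i \<noteq> edge_slots n ! j"
  proof
    assume "edge_slots n ! i = edge_slots n ! j"
    then have e: "sa n i = sa n j" "sb n i = sb n j" using ij by (auto simp: length_edge_slots edge_slots_nth)
    have "start n (sa n i) \<le> i" "start n (sa n j) \<le> j" using sa_props ij by (auto simp: length_edge_slots)
    then show False using e ij(3) by (simp add: sb_def)
  qed
qed

lemma mem_edge_slots: "1 \<le> a \<Longrightarrow> a < b \<Longrightarrow> b \<le> n \<Longrightarrow> (a, b) \<in> set (edge_slots n)"
proof -
  assume ab: "1 \<le> a" "a < b" "b \<le> n"
  have "(a,b) \<in> set (row n a)" using ab by (auto simp: row_def)
  moreover have "row n a \<in> set (map (row n) [1..<Suc n])" using ab by auto
  ultimately show ?thesis unfolding edge_slots_row by auto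
qed

lemma set_edge_slots: "set (edge_slots n) = {(a, b). 1 \<le> a \<and> a < b \<and> b \<le> n}"
proof (rule equalityI)
  show "set (edge_slots n) \<subseteq> {(a, b). 1 \<le> a \<and> a < b \<and> b \<le> n}" by (auto simp: edge_slots_def)
  show "{(a, b). 1 \<le> a \<and> a < b \<and> b \<le> n} \<subseteq> set (edge_slots n)" using mem_edge_slots by auto
qed

lemma graph_code_nth: "i < Nn n \<Longrightarrow> graph_code n adj ! i = adj (sa n i) (sb n i)"
  by (simp add: graph_code_def length_edge_slots edge_slots_nth)

lemma length_graph_code: "length (graph_code n adj) = Nn n"
  by (simp add: graph_code_def length_edge_slots)




definition dgt :: "(nat \<Rightarrow> nat \<Rightarrow> bool) \<Rightarrow> nat \<Rightarrow> nat \<Rightarrow> nat \<Rightarrow> nat \<Rightarrow> nat" where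
  "dgt adj M u v w = (if inW M u v w then (if adj u w then 1 else if adj v w then 2 else 0) else 0)"
definition tval :: "(nat \<Rightarrow> nat \<Rightarrow> bool) \<Rightarrow> nat \<Rightarrow> nat \<Rightarrow> nat \<Rightarrow> nat" where
  "tval adj M u v = (\<Sum>w<M+1. dgt adj M u v w * 3^w)"
definition Xval :: "nat \<Rightarrow> (nat \<Rightarrow> nat \<Rightarrow> bool) \<Rightarrow> nat \<Rightarrow> nat \<Rightarrow> nat \<Rightarrow> nat" where
  "Xval n adj M u v = (tval adj M u v * (n+1) + u) * (n+1) + v"
definition restl :: "nat \<Rightarrow> (nat \<Rightarrow> nat \<Rightarrow> bool) \<Rightarrow> nat \<Rightarrow> nat \<Rightarrow> nat \<Rightarrow> bool list" where
  "restl n adj M u v = map (\<lambda>(a,b). adj a b) (filter (\<lambda>(a,b). \<not> spec M u v a b) (edge_slots n))"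
definition pcode :: "nat \<Rightarrow> (nat \<Rightarrow> nat \<Rightarrow> bool) \<Rightarrow> nat \<Rightarrow> nat \<Rightarrow> bool list" where
  "pcode n adj u v = bits (Xval n adj (Md n) u v) (Ld n) @ restl n adj (Md n) u v"

lemma dgt_lt: "dgt adj M u v w < 3" by (simp add: dgt_def)

lemma dig_tval: "w \<le> M \<Longrightarrow> dig (tval adj M u v) w = dgt adj M u v w"
  unfolding dig_def tval_def by (subst digit_sum) (auto simp: dgt_lt)

lemma digits_bound: "(\<forall>w. d w < (3::nat)) \<Longrightarrow> (\<Sum>w<K. d w * 3^w) < 3^K"
proof (induction K)
  case 0 then show ?case by simp
next
  case (Suc K)
  have "d K \<le> 2" using Suc.prems[rule_format, of K] by simp
  then have "d K * 3^K \<le> 2 * 3^K" by simp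
  moreover have "(\<Sum>w<K. d w * 3^w) < 3^K" using Suc by simp
  ultimately show ?case by (simp only: sum.lessThan_Suc power_Suc)
qed

lemma outacc_eq: "k \<le> N \<Longrightarrow> outacc n M u v t R N k = bl2n (map (obit n M u v t R) [N-k..<N])"
proof (induction k)
  case 0 then show ?case by (simp add: outacc_def)
next
  case (Suc k)
  have k: "k < N" using Suc.prems by simp
  have "[N - Suc k..<N] = (N - Suc k) # [Suc (N - Suc k)..<N]" using k by (intro upt_conv_Cons) simp
  moreover have "Suc (N - Suc k) = N - k" using k by (rule Suc_diff_Suc)
  ultimately have e: "[N - Suc k..<N] = (N - Suc k) # [N-k..<N]" by simp
  have "outacc n M u v t R N (Suc k) = 2 * outacc n M u v t R N k + (if obit n M u v t R (N - 1 - k) then 2 else 1)"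
    by (simp add: outacc_def)
  also have "N - 1 - k = N - Suc k" by simp
  finally show ?case using Suc by (simp add: e bl2n_Cons)
qed

lemma cnt_filter:
  assumes "i \<le> Nn n"
  shows "cnt n M u v i = length (filter (\<lambda>(a,b). spec M u v a b) (take i (edge_slots n)))"
  using assms
proof (induction i)
  case 0 then show ?case by (simp add: cnt_def)
next
  case (Suc i)
  then have i: "i < length (edge_slots n)" by (simp add: length_edge_slots)
  have "take (Suc i) (edge_slots n) = take i (edge_slots n) @ [edge_slots n ! i]"
    using i by (rule take_Suc_conv_app_nth)
  then show ?case using Suc i
    by (simp add: cnt_def spi_def edge_slots_nth length_edge_slots)
qed

lemma filter_nth_idx:
  assumes "i < length xs" "Q (xs ! i)"
  shows "length (filter Q (take i xs)) < length (filter Q xs) \<and> filter Q xs ! length (filter Q (take i xs)) = xs ! i"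
proof -
  have xs: "xs = take i xs @ xs ! i # drop (Suc i) xs" using assms(1) by (simp add: id_take_nth_drop)
  have "filter Q xs = filter Q (take i xs) @ xs ! i # filter Q (drop (Suc i) xs)"
    using assms(2) by (subst xs) simp
  then show ?thesis by (simp add: nth_append)
qed

locale encsetup =
  fixes n :: nat and adj :: "nat \<Rightarrow> nat \<Rightarrow> bool" and u v :: nat
  assumes g: "is_graph n adj" and uv: "u \<noteq> v" "u \<in> {1..n}" "v \<in> {1..n}"
    and Mn: "Md n \<le> n" and q1: "1 \<le> qd n"
    and nocommon: "\<And>w. inW (Md n) u v w \<Longrightarrow> \<not> (adj u w \<and> adj v w)"
begin

abbreviation "M \<equiv> Md n"
abbreviation "t \<equiv> tval adj M u v"
abbreviation "X \<equiv> Xval n adj M u v"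
abbreviation "rest \<equiv> restl n adj M u v"

lemma sym: "adj a b \<longleftrightarrow> adj b a" using g unfolding is_graph_def by blast

lemma X_bound: "X < 2 ^ Ld n"
proof -
  have t: "t < 3 ^ (M + 1)" unfolding tval_def by (rule digits_bound) (simp add: dgt_lt)
  have M1: "M + 1 = 5 * qd n" using q1 by (simp add: Md_def)
  have "(3::nat) ^ (M+1) = 243 ^ qd n" unfolding M1 by (simp add: power_mult)
  also have "\<dots> \<le> 256 ^ qd n" by (rule power_mono) auto
  also have "\<dots> = 2 ^ (8 * qd n)" by (simp add: power_mult)
  finally have t2: "t + 1 \<le> 2 ^ (8 * qd n)" using t by simp
  have "n < 2 ^ wd n" unfolding wd_def by (rule LeastI[of _ n]) simp
  then have n2: "n + 1 \<le> 2 ^ wd n" by simp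
  have "X < (t + 1) * (n+1) * (n+1)"
  proof -
    have "u \<le> n" "v \<le> n" using uv by auto
    then have "X \<le> (t * (n+1) + n) * (n+1) + n" unfolding Xval_def
      by (intro add_mono mult_right_mono) auto
    also have "\<dots> < (t + 1) * (n+1) * (n+1)" by (simp add: algebra_simps)
    finally show ?thesis .
  qed
  also have "\<dots> \<le> 2 ^ (8 * qd n) * 2 ^ wd n * 2 ^ wd n"
    by (intro mult_mono t2 n2) auto
  also have "\<dots> = 2 ^ Ld n"
  proof -
    have "(2::nat) ^ wd n * 2 ^ wd n = 2 ^ (wd n + wd n)" by (rule power_add[symmetric])
    also have "wd n + wd n = 2 * wd n" by simp
    finally have "(2::nat) ^ wd n * 2 ^ wd n = 2 ^ (2 * wd n)" .
    then have "(2::nat) ^ (8 * qd n) * 2 ^ wd n * 2 ^ wd n = 2 ^ (8 * qd n) * 2 ^ (2 * wd n)"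
      by (simp only: mult.assoc)
    also have "\<dots> = 2 ^ (8 * qd n + 2 * wd n)" by (rule power_add[symmetric])
    finally show ?thesis by (simp only: Ld_def)
  qed
  finally show ?thesis .
qed

lemma decF_pcode: "decF (bl2n (pcode n adj u v)) n = bl2n (graph_code n adj)"
proof -
  let ?p = "pcode n adj u v"
  have b: "binv (bl2n ?p) (Ld n) = X" unfolding pcode_def by (rule binv_bits[OF X_bound])
  have r: "itlb (Ld n) (bl2n ?p) = bl2n rest" unfolding pcode_def by (rule itlb_bits)
  have vv: "X mod (n+1) = v"
  proof -
    have "X = v + (t * (n+1) + u) * (n+1)" by (simp add: Xval_def)
    then have "X mod (n+1) = v mod (n+1)" by (simp only: mod_mult_self1)
    then show ?thesis using uv by simp
  qed
  have xd: "X div (n+1) = u + t * (n+1)"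
  proof -
    have "X = v + (t * (n+1) + u) * (n+1)" by (simp add: Xval_def)
    then have "X div (n+1) = (t * (n+1) + u) + v div (n+1)" by (simp only: div_mult_self1)
    then show ?thesis using uv by simp
  qed
  have uu: "X div (n+1) mod (n+1) = u" unfolding xd mod_mult_self1 using uv by simp
  have tt: "X div (n+1) div (n+1) = t"
  proof -
    have "(u + t * (n+1)) div (n+1) = t + u div (n+1)" using div_mult_self1[of "n+1" u t] by simp
    then show ?thesis unfolding xd using uv by simp
  qed
  have "decF (bl2n ?p) n = outacc n M u v t (bl2n rest) (Nn n) (Nn n)"
    unfolding decF_def b r vv uu tt ..
  also have "\<dots> = bl2n (map (obit n M u v t (bl2n rest)) [0..<Nn n])"
    by (simp add: outacc_eq)
  also have "map (obit n M u v t (bl2n rest)) [0..<Nn n] = graph_code n adj"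
  proof (rule nth_equalityI)
    show "length (map (obit n M u v t (bl2n rest)) [0..<Nn n]) = length (graph_code n adj)"
      by (simp add: length_graph_code)
    fix i assume "i < length (map (obit n M u v t (bl2n rest)) [0..<Nn n])"
    then have i: "i < Nn n" by simp
    let ?a = "sa n i" and ?b = "sb n i"
    have ab: "?a < ?b" "?b \<le> n" "1 \<le> ?a" using sb_props[OF i] sa_props[OF i] by auto
    have "obit n M u v t (bl2n rest) i = adj ?a ?b"
    proof (cases "spi n M u v i")
      case True
      then have sp: "spec M u v ?a ?b" by (simp add: spi_def)
      show ?thesis
      proof (cases "?a = u \<or> ?a = v")
        case True
        then have w: "inW M u v ?b" using sp by (auto simp: spec_def inW_def)
        then have d: "dig t ?b = dgt adj M u v ?b" by (intro dig_tval) (simp add: inW_def)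
        show ?thesis using True True w nocommon[of ?b] \<open>spi n M u v i\<close>
          by (auto simp: obit_def sbit_def d dgt_def)
      next
        case False
        then have w: "inW M u v ?a" and bb: "?b = u \<or> ?b = v" using sp by (auto simp: spec_def)
        then have d: "dig t ?a = dgt adj M u v ?a" by (intro dig_tval) (simp add: inW_def)
        show ?thesis using False w bb nocommon[of ?a] \<open>spi n M u v i\<close> sym[of ?a u] sym[of ?a v]
          by (auto simp: obit_def sbit_def d dgt_def)
      qed
    next
      case False
      let ?Q = "\<lambda>(a,b). \<not> spec M u v a b" and ?xs = "edge_slots n"
      have il: "i < length ?xs" using i by (simp add: length_edge_slots)
      have xi: "?xs ! i = (?a, ?b)" using i by (rule edge_slots_nth)
      have Qi: "?Q (?xs ! i)" using False xi by (simp add: spi_def)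
      have c: "cnt n M u v i = length (filter (\<lambda>(a,b). spec M u v a b) (take i ?xs))"
        using i by (intro cnt_filter) simp
      have "length (filter (\<lambda>(a,b). spec M u v a b) (take i ?xs)) + length (filter ?Q (take i ?xs)) = i"
        using sum_length_filter_compl[of "\<lambda>(a,b). spec M u v a b" "take i ?xs"] il
        by (simp add: case_prod_unfold)
      then have idx: "i - cnt n M u v i = length (filter ?Q (take i ?xs))" using c by simp
      from filter_nth_idx[of i ?xs ?Q, OF il Qi]
      have f: "length (filter ?Q (take i ?xs)) < length (filter ?Q ?xs)"
        "filter ?Q ?xs ! length (filter ?Q (take i ?xs)) = (?a, ?b)" using xi by auto
      show ?thesis using False f
        by (simp add: obit_def bitat_bl2n idx restl_def)
    qed
    then show "map (obit n M u v t (bl2n rest)) [0..<Nn n] ! i = graph_code n adj ! i"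
      using i by (simp add: graph_code_nth)
  qed
  finally show ?thesis .
qed

end




context encsetup
begin

lemma spec_count: "2 * (M - 2) \<le> length (filter (\<lambda>(a,b). spec M u v a b) (edge_slots n))"
proof -
  let ?F = "filter (\<lambda>(a,b). spec M u v a b) (edge_slots n)"
  let ?W = "{w. inW M u v w}"
  let ?f = "\<lambda>(x::nat, w::nat). (min x w, max x w)"
  have W: "?W = {1..M} - {u, v}" by (auto simp: inW_def)
  have cW: "M - 2 \<le> card ?W"
  proof -
    have "card {1..M} - card {u, v} \<le> card ({1..M} - {u, v})" by (rule diff_card_le_card_Diff) simp
    moreover have "card {u, v} = 2" using uv by simp
    ultimately show ?thesis unfolding W by simp
  qed
  have fin: "finite ?W" unfolding W by simp
  have inj: "inj_on ?f ({u, v} \<times> ?W)"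
  proof (rule inj_onI)
    fix p1 p2 assume p: "p1 \<in> {u, v} \<times> ?W" "p2 \<in> {u, v} \<times> ?W" "?f p1 = ?f p2"
    obtain x1 w1 where 1: "p1 = (x1, w1)" by (cases p1)
    obtain x2 w2 where 2: "p2 = (x2, w2)" by (cases p2)
    show "p1 = p2" using p unfolding 1 2 by (auto simp: inW_def min_def max_def split: if_splits)
  qed
  have sub: "?f ` ({u, v} \<times> ?W) \<subseteq> set ?F"
  proof
    fix p assume "p \<in> ?f ` ({u, v} \<times> ?W)"
    then obtain x w where xw: "x \<in> {u, v}" "inW M u v w" "p = (min x w, max x w)" by auto
    have "x \<noteq> w" using xw by (auto simp: inW_def)
    moreover have "1 \<le> x" "x \<le> n" using xw uv by auto
    moreover have "1 \<le> w" "w \<le> n" using xw Mn by (auto simp: inW_def)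
    ultimately have "p \<in> set (edge_slots n)" using xw(3)
      by (auto simp: set_edge_slots min_def max_def)
    moreover have "spec M u v (min x w) (max x w)" using xw by (auto simp: spec_def min_def max_def)
    ultimately show "p \<in> set ?F" using xw(3) by auto
  qed
  have "2 * (M - 2) \<le> card ({u, v} \<times> ?W)" using cW uv fin by (simp add: card_cartesian_product)
  also have "\<dots> = card (?f ` ({u, v} \<times> ?W))" using inj by (simp add: card_image)
  also have "\<dots> \<le> card (set ?F)" using sub by (intro card_mono) auto
  also have "\<dots> = length ?F" by (intro distinct_card distinct_filter distinct_edge_slots)
  finally show ?thesis .
qed

lemma length_pcode: "length (pcode n adj u v) + 2 * (M - 2) \<le> Ld n + Nn n"
proof -
  have "length (filter (\<lambda>(a,b). spec M u v a b) (edge_slots n)) + length rest = Nn n"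
    using sum_length_filter_compl[of "\<lambda>(a,b). spec M u v a b" "edge_slots n"]
    by (simp add: restl_def length_edge_slots case_prod_unfold)
  then show ?thesis using spec_count by (simp add: pcode_def bits_def)
qed

end

definition decphi :: "bool list \<Rightarrow> nat \<Rightarrow> bool list option" where
  "decphi p y = Some (n2bl (decF (bl2n p) y))"

lemma computable_decphi: "computable_descr decphi"
proof -
  obtain t where t: "\<And>xs r. length xs = 2 \<Longrightarrow> eval t xs r \<longleftrightarrow> r = decF (xs!0) (xs!1)"
    using decF_base unfolding rec_fn_def by blast
  show ?thesis unfolding computable_descr_def
  proof (rule exI[of _ t], intro allI)
    fix p y x
    have "decphi p y = Some x \<longleftrightarrow> bl2n x = decF (bl2n p) y"
      unfolding decphi_def by (metis bl2n_n2bl n2bl_bl2n option.inject)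
    also have "\<dots> \<longleftrightarrow> eval t [bl2n p, y] (bl2n x)" using t[of "[bl2n p, y]" "bl2n x"] by simp
    finally show "decphi p y = Some x \<longleftrightarrow> eval t [bl2n p, y] (bl2n x)" .
  qed
qed

lemma KC_le: "U q y = Some x \<Longrightarrow> KC U x y \<le> length q"
  unfolding KC_def by (rule Least_le) blast

lemma compress:
  assumes "universal U"
  shows "\<exists>k. \<forall>n adj u v. encsetup n adj u v \<longrightarrow> KC U (graph_code n adj) n + 2 * (Md n - 2) \<le> Ld n + Nn n + k"
proof -
  obtain k where k: "\<And>p y x. decphi p y = Some x \<Longrightarrow> \<exists>q. U q y = Some x \<and> length q \<le> length p + k"
    using assms computable_decphi unfolding universal_def by blast
  show ?thesis
  proof (rule exI[of _ k], intro allI impI)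
    fix n adj u v assume e: "encsetup n adj u v"
    have "decphi (pcode n adj u v) n = Some (graph_code n adj)"
      unfolding decphi_def encsetup.decF_pcode[OF e] by simp
    then obtain q where q: "U q n = Some (graph_code n adj)" "length q \<le> length (pcode n adj u v) + k"
      using k by blast
    have "KC U (graph_code n adj) n \<le> length q" using q(1) by (rule KC_le)
    then show "KC U (graph_code n adj) n + 2 * (Md n - 2) \<le> Ld n + Nn n + k"
      using q(2) encsetup.length_pcode[OF e] by linarith
  qed
qed




definition bmv :: "(nat \<Rightarrow> nat \<Rightarrow> bool) \<Rightarrow> nat \<Rightarrow> nat \<Rightarrow> nat" where
  "bmv adj M v = (\<Sum>w<M+1. (if 1 \<le> w \<and> adj v w then 1 else 0) * 2^w)"
definition lcode :: "(nat \<Rightarrow> nat \<Rightarrow> bool) \<Rightarrow> nat \<Rightarrow> nat \<Rightarrow> nat" where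
  "lcode adj M v = prod_encode (v, bmv adj M v)"
definition Drt :: "bool list \<Rightarrow> bool list \<Rightarrow> bool list list \<Rightarrow> bool list \<Rightarrow> nat" where
  "Drt a b cs d = Dn (list_encode (map bl2n cs)) (bl2n d)"

lemma computable_Drt: "computable_router Drt"
proof -
  have "rec_fn 4 (\<lambda>xs. Dn (xs!2) (xs!3))" by (intro Dn_rf rf_proj) simp_all
  then obtain t where t: "\<And>xs r. length xs = 4 \<Longrightarrow> eval t xs r \<longleftrightarrow> r = Dn (xs!2) (xs!3)"
    unfolding rec_fn_def by blast
  show ?thesis unfolding computable_router_def
  proof (rule exI[of _ t], intro allI)
    fix a b cs d r
    show "(Drt a b cs d = r) = eval t [bl2n a, bl2n b, list_encode (map bl2n cs), bl2n d] r"
      using t[of "[bl2n a, bl2n b, list_encode (map bl2n cs), bl2n d]" r] by (auto simp: Drt_def)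
  qed
qed

lemma tb_bmv: "tb (bmv adj M v) w \<longleftrightarrow> 1 \<le> w \<and> w \<le> M \<and> adj v w"
proof -
  have "bmv adj M v div 2^w mod 2 = (if w < M+1 then (if 1 \<le> w \<and> adj v w then 1 else 0) else 0)"
    unfolding bmv_def by (rule digit_sum) auto
  then show ?thesis unfolding tb_def by (auto simp: odd_iff_mod_2_eq_one split: if_splits)
qed

lemma itl_nz: "i < length cs \<Longrightarrow> itl i (list_encode cs) \<noteq> 0"
  by (simp add: itl_enc list_encode_0)
lemma itl_z: "length cs \<le> i \<Longrightarrow> itl i (list_encode cs) = 0"
  by (simp add: itl_enc)

lemma find_eq:
  "(LEAST i. itl i (list_encode cs) = 0 \<or> P (lhd (itl i (list_encode cs)))) = (LEAST i. length cs \<le> i \<or> P (cs ! i))"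
proof -
  have "(itl i (list_encode cs) = 0 \<or> P (lhd (itl i (list_encode cs)))) \<longleftrightarrow> (length cs \<le> i \<or> P (cs ! i))" for i
  proof (cases "i < length cs")
    case True
    then have "itl i (list_encode cs) \<noteq> 0" "lhd (itl i (list_encode cs)) = cs ! i"
      using itl_nz lhd_itl by auto
    then show ?thesis using True by simp
  next
    case False
    then show ?thesis using itl_z by simp
  qed
  then show ?thesis by simp
qed

lemma Dn_found1:
  assumes "\<exists>i<length cs. cs ! i = d"
  shows "Dn (list_encode cs) d = Suc (LEAST i. length cs \<le> i \<or> cs ! i = d) \<and>
         (LEAST i. length cs \<le> i \<or> cs ! i = d) < length cs \<and> cs ! (LEAST i. length cs \<le> i \<or> cs ! i = d) = d"
proof -
  have f: "find1 (list_encode cs) d = (LEAST i. length cs \<le> i \<or> cs ! i = d)"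
    unfolding find1_def by (rule find_eq[where P="\<lambda>x. x = d"])
  from least_bounded[OF assms] show ?thesis unfolding Dn_def f using itl_nz by auto
qed

lemma Dn_found2:
  assumes "\<not> (\<exists>i<length cs. cs ! i = d)" "\<exists>i<length cs. tb (psnd d) (pfst (cs ! i))"
  shows "Dn (list_encode cs) d = Suc (LEAST i. length cs \<le> i \<or> tb (psnd d) (pfst (cs ! i))) \<and>
         (LEAST i. length cs \<le> i \<or> tb (psnd d) (pfst (cs ! i))) < length cs \<and>
         tb (psnd d) (pfst (cs ! (LEAST i. length cs \<le> i \<or> tb (psnd d) (pfst (cs ! i)))))"
proof -
  have f1: "find1 (list_encode cs) d = length cs"
    unfolding find1_def find_eq[where P="\<lambda>x. x = d"] by (rule least_bounded_none[OF assms(1)])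
  have f2: "find2 (list_encode cs) d = (LEAST i. length cs \<le> i \<or> tb (psnd d) (pfst (cs ! i)))"
    unfolding find2_def by (rule find_eq[where P="\<lambda>x. tb (psnd d) (pfst x)"])
  from least_bounded[OF assms(2)] show ?thesis unfolding Dn_def f1 f2 using itl_nz itl_z by auto
qed

locale routing =
  fixes n :: nat and adj :: "nat \<Rightarrow> nat \<Rightarrow> bool" and ports :: "nat \<Rightarrow> nat list" and M :: nat
  assumes g: "is_graph n adj" and vp: "valid_ports n adj ports"
    and common: "\<And>u v. u \<in> {1..n} \<Longrightarrow> v \<in> {1..n} \<Longrightarrow> u \<noteq> v \<Longrightarrow> \<exists>w. inW M u v w \<and> adj u w \<and> adj v w"
begin

definition lab :: "nat \<Rightarrow> bool list" where "lab v = n2bl (lcode adj M v)"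
definition bits0 :: "nat \<Rightarrow> bool list" where "bits0 v = []"
abbreviation "nh \<equiv> next_hop Drt ports lab bits0"

lemma adj_in: "adj a b \<Longrightarrow> a \<in> {1..n} \<and> b \<in> {1..n} \<and> a \<noteq> b \<and> adj b a"
  using g unfolding is_graph_def by blast

lemma port_set: "u \<in> {1..n} \<Longrightarrow> set (ports u) = {w. adj u w}"
  using vp unfolding valid_ports_def by blast

lemma Drt_eq: "Drt (bits0 u) (lab u) (map lab (ports u)) (lab v) =
   Dn (list_encode (map (lcode adj M) (ports u))) (lcode adj M v)"
  by (simp add: Drt_def lab_def comp_def)

lemma step:
  assumes u: "u \<in> {1..n}" and v: "v \<in> {1..n}" and uv: "u \<noteq> v"
  shows "Drt (bits0 u) (lab u) (map lab (ports u)) (lab v) \<in> {1..length (ports u)} \<and>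
         (adj u v \<longrightarrow> nh v u = v) \<and> (\<not> adj u v \<longrightarrow> adj u (nh v u) \<and> adj (nh v u) v)"
proof -
  let ?cs = "map (lcode adj M) (ports u)" and ?d = "lcode adj M v"
  have ps: "set (ports u) = {w. adj u w}" using port_set[OF u] .
  have csi: "\<And>i. i < length ?cs \<Longrightarrow> ?cs ! i = ?d \<longleftrightarrow> ports u ! i = v"
    by (auto simp: lcode_def)
  show ?thesis
  proof (cases "adj u v")
    case True
    then obtain i where i: "i < length (ports u)" "ports u ! i = v" using ps
      by (metis in_set_conv_nth mem_Collect_eq)
    then have ex: "\<exists>i<length ?cs. ?cs ! i = ?d" using csi by auto
    from Dn_found1[OF ex] csi show ?thesis using True
      by (auto simp: Drt_eq next_hop_def)
  next
    case False
    have ex1: "\<not> (\<exists>i<length ?cs. ?cs ! i = ?d)"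
    proof
      assume "\<exists>i<length ?cs. ?cs ! i = ?d"
      then obtain i where "i < length (ports u)" "ports u ! i = v" using csi by auto
      then have "v \<in> set (ports u)" by (metis nth_mem)
      with ps False show False by simp
    qed
    obtain w where w: "inW M u v w" "adj u w" "adj v w" using common[OF u v uv] by blast
    then obtain j where j: "j < length (ports u)" "ports u ! j = w" using ps
      by (metis in_set_conv_nth mem_Collect_eq)
    have tbj: "\<And>i. i < length ?cs \<Longrightarrow> tb (psnd ?d) (pfst (?cs ! i)) \<longleftrightarrow> 1 \<le> ports u ! i \<and> ports u ! i \<le> M \<and> adj v (ports u ! i)"
      by (simp add: lcode_def tb_bmv)
    have ex2: "\<exists>i<length ?cs. tb (psnd ?d) (pfst (?cs ! i))"
      using j w tbj[of j] by (auto simp: inW_def)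
    let ?L = "LEAST i. length ?cs \<le> i \<or> tb (psnd ?d) (pfst (?cs ! i))"
    from Dn_found2[OF ex1 ex2] have L: "Dn (list_encode ?cs) ?d = Suc ?L" "?L < length (ports u)"
      "adj v (ports u ! ?L)" using tbj by auto
    have "ports u ! ?L \<in> set (ports u)" using L(2) by simp
    then have "adj u (ports u ! ?L)" using ps by simp
    moreover have "adj (ports u ! ?L) v" using L(3) adj_in by blast
    ultimately show ?thesis using False L by (auto simp: Drt_eq next_hop_def)
  qed
qed

lemma walk0_eq: "walk adj 0 a b \<Longrightarrow> a = b"
  by (erule walk.cases) auto

lemma walk1_adj: "walk adj (Suc 0) a b \<Longrightarrow> adj a b"
  by (auto elim!: walk.cases)

lemma spr: "shortest_path_routing n adj nh"
  unfolding shortest_path_routing_def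
proof (intro ballI impI)
  fix u v assume u: "u \<in> {1..n}" and v: "v \<in> {1..n}" and uv: "u \<noteq> v"
  have S: "adj u v \<longrightarrow> nh v u = v" "\<not> adj u v \<longrightarrow> adj u (nh v u) \<and> adj (nh v u) v"
    using step[OF u v uv] by auto
  show "\<exists>d. is_dist adj u v d \<and> (\<forall>i<d. adj ((nh v ^^ i) u) ((nh v ^^ Suc i) u)) \<and> (nh v ^^ d) u = v"
  proof (cases "adj u v")
    case True
    have "is_dist adj u v 1"
      unfolding is_dist_def using True uv by (auto intro: walk.intros dest: walk0_eq)
    then show ?thesis using True S by (intro exI[of _ 1]) auto
  next
    case False
    let ?w = "nh v u"
    have w: "adj u ?w" "adj ?w v" using S False by auto
    have wn: "?w \<in> {1..n}" "?w \<noteq> v" using adj_in[OF w(2)] by auto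
    have wv: "nh v ?w = v" using step[OF wn(1) v wn(2)] w(2) by auto
    have "walk adj 2 u v" using w by (auto simp: numeral_2_eq_2 intro!: walk.intros)
    moreover have "\<forall>k<2. \<not> walk adj k u v"
    proof (intro allI impI)
      fix k :: nat assume "k < 2"
      then have "k = 0 \<or> k = Suc 0" by auto
      then show "\<not> walk adj k u v" using uv False walk0_eq walk1_adj by auto
    qed
    ultimately have "is_dist adj u v 2" unfolding is_dist_def by simp
    moreover have "\<forall>i<2. adj ((nh v ^^ i) u) ((nh v ^^ Suc i) u)"
    proof (intro allI impI)
      fix i :: nat assume "i < 2"
      then have "i = 0 \<or> i = Suc 0" by auto
      then show "adj ((nh v ^^ i) u) ((nh v ^^ Suc i) u)" using w wv by auto
    qed
    moreover have "(nh v ^^ 2) u = v" using wv by (simp add: numeral_2_eq_2)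
    ultimately show ?thesis by blast
  qed
qed

lemma rbp: "routes_by_ports n Drt ports lab bits0"
  unfolding routes_by_ports_def using step by blast

lemma inj_lab: "inj_on lab {1..n}"
proof (rule inj_onI)
  fix a b assume "lab a = lab b"
  then have "lcode adj M a = lcode adj M b" unfolding lab_def by (metis bl2n_n2bl)
  then show "a = b" by (simp add: lcode_def)
qed

end




lemma wd_gt: "n < 2 ^ wd n"
  unfolding wd_def by (rule LeastI[of _ n]) simp

lemma wd_big: "2 ^ W \<le> n \<Longrightarrow> W < wd n"
proof (rule ccontr)
  assume a: "2 ^ W \<le> n" "\<not> W < wd n"
  then have p: "(2::nat) ^ wd n \<le> 2 ^ W" by (intro power_increasing) auto
  show False using a(1) wd_gt[of n] p by linarith
qed

lemma wd_low: "1 \<le> n \<Longrightarrow> 2 ^ (wd n - 1) \<le> n"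
proof -
  assume n: "1 \<le> n"
  have nz: "wd n \<noteq> 0" using wd_gt[of n] n by (cases "wd n") auto
  have "\<not> n < 2 ^ (wd n - 1)" unfolding wd_def by (rule not_less_Least) (use nz in \<open>simp add: wd_def\<close>)
  then show ?thesis by simp
qed

lemma sq_le_pow: assumes "7 \<le> w" shows "w * w \<le> 2 ^ (w - 1)"
  using assms
proof (induction w rule: nat_induct_at_least)
  case base then show ?case by simp
next
  case (Suc w)
  have "Suc w * Suc w = w * w + 2 * w + 1" by simp
  also have "\<dots> \<le> 2 * (w * w)"
  proof -
    have "7 * w \<le> w * w" using Suc.hyps by (intro mult_le_mono1)
    then show ?thesis using Suc.hyps by linarith
  qed
  also have "\<dots> \<le> 2 * 2 ^ (w - 1)" using Suc.IH by simp
  also have "\<dots> = 2 ^ (Suc w - 1)" using Suc.hyps by (cases w) auto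
  finally show ?case .
qed

lemma bmv_bound: "bmv adj M v < 2 ^ (M + 1)"
proof -
  have "\<And>K. (\<Sum>w<K. (if 1 \<le> w \<and> adj v w then 1 else 0) * (2::nat)^w) < 2^K"
  proof -
    fix K show "(\<Sum>w<K. (if 1 \<le> w \<and> adj v w then 1 else 0) * (2::nat)^w) < 2^K"
    proof (induction K)
      case 0 then show ?case by simp
    next
      case (Suc K)
      have "(if 1 \<le> K \<and> adj v K then 1 else 0) * (2::nat)^K \<le> 2^K" by simp
      then show ?case using Suc by (simp only: sum.lessThan_Suc power_Suc)
    qed
  qed
  then show ?thesis unfolding bmv_def by blast
qed

lemma lab_len:
  assumes "v \<le> n" "n < 2 ^ (M + 1)"
  shows "length (n2bl (lcode adj M v)) \<le> 2 * M + 4"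
proof -
  let ?b = "bmv adj M v"
  let ?s = "v + ?b"
  have b: "?b + 1 \<le> 2 ^ (M+1)" using bmv_bound[of adj M v] by simp
  have "v + 1 \<le> 2 ^ (M+1)" using assms by simp
  then have s: "?s + 1 \<le> 2 ^ (M + 2)" using b by simp
  have z: "lcode adj M v = triangle ?s + v" by (simp add: lcode_def prod_encode_def)
  have "triangle ?s \<le> ?s * Suc ?s" unfolding triangle_def by (rule div_le_dividend)
  then have "lcode adj M v + 1 \<le> (?s + 1) * (?s + 1)" unfolding z by simp
  also have "\<dots> \<le> 2 ^ (M+2) * 2 ^ (M+2)" using s by (intro mult_mono) auto
  also have "\<dots> = 2 ^ ((M+2) + (M+2))" by (rule power_add[symmetric])
  also have "(M+2) + (M+2) = 2 * M + 4" by simp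
  finally have "2 ^ length (n2bl (lcode adj M v)) \<le> (2::nat) ^ (2 * M + 4)"
    using length_n2bl[of "lcode adj M v"] by linarith
  then show ?thesis by (rule power_le_imp_le_exp[rotated]) simp
qed




lemma arith_label:
  fixes c l :: real and q w :: nat
  assumes c: "c \<ge> 0" and qw: "8*q \<le> w*w" and wl: "real w - 1 \<le> l" and w41: "41 \<le> w" and q1: "1 \<le> q"
  shows "real (2 * (5*q - 1) + 4) \<le> (1 + (c+3)*l) * l"
proof -
  have W: "41 \<le> real w" using w41 by simp
  then have l40: "40 \<le> l" using wl by linarith
  have e1: "real (2*(5*q-1)+4) = 10 * real q + 2" using q1 by (simp add: of_nat_diff)
  have "real (8*q) \<le> real (w*w)" using qw by (simp only: of_nat_le_iff)
  then have e2: "8 * real q \<le> real w * real w" by simp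
  have e3: "real w * real w \<le> (l+1)*(l+1)" using wl W by (intro mult_mono) auto
  have e4: "40 * l \<le> l * l" using l40 by (intro mult_right_mono) auto
  have e5: "(1 + (c+3)*l)*l = l + c*(l*l) + 3*(l*l)" by (simp add: algebra_simps)
  have e6: "c*(l*l) \<ge> 0" using c by simp
  have e7: "(l+1)*(l+1) = l*l + 2*l + 1" by (simp add: algebra_simps)
  show ?thesis unfolding e1 e5 using e2 e3 e4 e6 e7 l40 by linarith
qed

lemma arith_P2:
  fixes c l :: real and q w k C KC NN :: nat
  assumes w8: "w*w < 8*q + 8" and w0: "4*C + 4*k + 40 < w"
    and r: "real NN - c*l \<le> real KC" and kc: "KC + 2*(5*q - 1 - 2) \<le> (8*q + 2*w) + NN + k"
    and cC: "c \<le> real C" and c0: "0 \<le> c" and l0: "0 \<le> l" and lw: "l < real w" and q1: "1 \<le> q"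
  shows False
proof -
  have a1: "c*l \<le> real C * l" using cC l0 by (rule mult_right_mono)
  have a2: "real C * l \<le> real C * real w" using lw by (intro mult_left_mono) auto
  have kc': "real KC + (10 * real q - 6) \<le> 8 * real q + 2 * real w + real NN + real k"
  proof -
    have "real (KC + 2*(5*q - 1 - 2)) \<le> real ((8*q + 2*w) + NN + k)" using kc by (simp only: of_nat_le_iff)
    moreover have "2*(5*q - 1 - 2) = 10*q - 6" by simp
    moreover have "real (10*q - 6) = 10 * real q - 6" using q1 by (simp add: of_nat_diff)
    ultimately show ?thesis by simp
  qed
  have m: "(4*C + 4*k + 41) * w \<le> w * w" using w0 by (intro mult_le_mono1) simp
  have m': "4 * (real C * real w) + 4 * (real k * real w) + 41 * real w \<le> real w * real w"
  proof -
    have eq: "(4*C + 4*k + 41) * w = 4*(C*w) + 4*(k*w) + 41*w" by (simp add: algebra_simps)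
    have m2: "4*(C*w) + 4*(k*w) + 41*w \<le> w*w" using m eq by linarith
    have "real (4*(C*w) + 4*(k*w) + 41*w) \<le> real (w*w)" using m2 by (simp only: of_nat_le_iff)
    then show ?thesis by (simp only: of_nat_add of_nat_mult of_nat_numeral)
  qed
  have w8': "real w * real w < 8 * real q + 8"
  proof -
    have "real (w*w) < real (8*q + 8)" using w8 by (simp only: of_nat_less_iff)
    then show ?thesis by (simp only: of_nat_add of_nat_mult of_nat_numeral)
  qed
  have kw: "real k \<le> real k * real w" using w0 by (simp add: mult_le_cancel_left1)
  have w1: "1 \<le> real w" using w0 by simp
  show False using a1 a2 kc' m' w8' kw w1 r by linarith
qed

theorem theorem2:
  fixes U :: "bool list \<Rightarrow> nat \<Rightarrow> bool list option" and c :: real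
  assumes "universal U" and "c \<ge> 0"
  shows "\<exists>D :: bool list \<Rightarrow> bool list \<Rightarrow> bool list list \<Rightarrow> bool list \<Rightarrow> nat.
           \<exists>K K' :: real. computable_router D \<and>
           (\<exists>N. \<forall>n \<ge> N. \<forall>adj ports.
              is_graph n adj \<and> random_graph U (c * log 2 n) n adj \<and> valid_ports n adj ports \<longrightarrow>
              (\<exists>lab bits :: nat \<Rightarrow> bool list.
                 inj_on lab {1..n} \<and>
                 (\<forall>u\<in>{1..n}. real (length (lab u)) \<le> (1 + (c + 3) * log 2 n) * log 2 n) \<and>
                 (\<forall>u\<in>{1..n}. real (length (bits u)) \<le> K) \<and>
                 routes_by_ports n D ports lab bits \<and>
                 shortest_path_routing n adj (next_hop D ports lab bits) \<and>
                 real (\<Sum>u\<in>{1..n}. length (bits u) + length (lab u))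
                   \<le> (c + 3) * n * (log 2 n)^2 + n * log 2 n + K' * n))"
proof -
  obtain k where k: "\<And>n adj u v. encsetup n adj u v \<Longrightarrow>
      KC U (graph_code n adj) n + 2 * (Md n - 2) \<le> Ld n + Nn n + k"
    using compress[OF assms(1)] by blast
  define C where "C = nat \<lceil>c\<rceil>"
  have cC: "c \<le> real C" unfolding C_def by (rule real_nat_ceiling_ge)
  define W0 where "W0 = 4*C + 4*k + 40"
  have main: "\<exists>lab bits :: nat \<Rightarrow> bool list.
                 inj_on lab {1..n} \<and>
                 (\<forall>u\<in>{1..n}. real (length (lab u)) \<le> (1 + (c + 3) * log 2 n) * log 2 n) \<and>
                 (\<forall>u\<in>{1..n}. real (length (bits u)) \<le> 0) \<and>
                 routes_by_ports n Drt ports lab bits \<and>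
                 shortest_path_routing n adj (next_hop Drt ports lab bits) \<and>
                 real (\<Sum>u\<in>{1..n}. length (bits u) + length (lab u))
                   \<le> (c + 3) * n * (log 2 n)^2 + n * log 2 n + 0 * n"
    if n: "2^W0 \<le> n" and g: "is_graph n adj" and r: "random_graph U (c * log 2 n) n adj"
      and vp: "valid_ports n adj ports" for n adj ports
  proof -
    define w where "w = wd n"
    define q where "q = qd n"
    define M where "M = Md n"
    define l where "l = log 2 (real n)"
    have w0: "W0 < w" unfolding w_def by (rule wd_big[OF n])
    have "1 \<le> (2::nat)^W0" by simp
    then have n1: "1 \<le> n" using n by linarith
    have q: "q = w * w div 8" by (simp add: q_def w_def qd_def)
    have wq: "w \<le> q"
    proof -
      have "w * 8 \<le> w * w" using w0 unfolding W0_def by (intro mult_le_mono2) simp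
      then show ?thesis unfolding q by (simp add: less_eq_div_iff_mult_less_eq)
    qed
    have q1: "1 \<le> q" using wq w0 by simp
    have q8: "8 * q \<le> w * w" unfolding q by simp
    have w8: "w * w < 8 * q + 8" unfolding q by simp
    have M: "M = 5 * q - 1" by (simp add: M_def q_def Md_def)
    have Mn: "M \<le> n"
    proof -
      have "M \<le> w * w" using M q8 by simp
      also have "\<dots> \<le> 2 ^ (w - 1)" using w0 unfolding W0_def by (intro sq_le_pow) simp
      also have "\<dots> \<le> n" unfolding w_def by (rule wd_low[OF n1])
      finally show ?thesis .
    qed
    have nM: "n < 2 ^ (M + 1)"
    proof -
      have "n < 2 ^ w" unfolding w_def by (rule wd_gt)
      also have "(2::nat) ^ w \<le> 2 ^ (M + 1)" using wq M q1 by (intro power_increasing) auto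
      finally show ?thesis .
    qed
    have lw: "l < real w" unfolding l_def w_def using wd_gt[of n] n1 by (intro log2_of_power_less) auto
    have wl: "real w - 1 \<le> l"
    proof -
      have "real (w - 1) \<le> l" unfolding l_def w_def by (rule le_log2_of_power[OF wd_low[OF n1]])
      then show ?thesis using w0 by (simp add: of_nat_diff)
    qed
    have l0: "0 \<le> l" unfolding l_def using n1 by simp
    have common: "\<exists>x. inW M u v x \<and> adj u x \<and> adj v x"
      if u: "u \<in> {1..n}" and v: "v \<in> {1..n}" and uv: "u \<noteq> v" for u v
    proof (rule ccontr)
      assume nc: "\<not> (\<exists>x. inW M u v x \<and> adj u x \<and> adj v x)"
      have e: "encsetup n adj u v"
        unfolding encsetup_def using g u v uv Mn q1 nc by (auto simp: M_def q_def)
      have kc: "KC U (graph_code n adj) n + 2 * (5 * q - 1 - 2) \<le> (8 * q + 2 * w) + Nn n + k"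
        using k[OF e] by (simp add: M[unfolded M_def] Ld_def q_def w_def)
      have rr: "real (Nn n) - c * l \<le> real (KC U (graph_code n adj) n)"
        using r by (simp add: random_graph_def Nn_def l_def)
      show False
        by (rule arith_P2[OF w8 _ rr kc cC assms(2) l0 lw q1]) (use w0 in \<open>simp add: W0_def\<close>)
    qed
    interpret R: routing n adj ports M
      by unfold_locales (use g vp common in auto)
    have lenlab: "real (length (R.lab u)) \<le> (1 + (c + 3) * l) * l" if "u \<in> {1..n}" for u
    proof -
      have "length (R.lab u) \<le> 2 * M + 4" unfolding R.lab_def
        by (rule lab_len) (use that nM in auto)
      then have "real (length (R.lab u)) \<le> real (2 * (5*q - 1) + 4)" using M by simp
      also have "\<dots> \<le> (1 + (c + 3) * l) * l"
        by (rule arith_label[OF assms(2) q8 wl _ q1]) (use w0 in \<open>simp add: W0_def\<close>)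
      finally show ?thesis .
    qed
    have tot: "real (\<Sum>u\<in>{1..n}. length (R.bits0 u) + length (R.lab u)) \<le> (c + 3) * n * l^2 + n * l"
    proof -
      have "real (\<Sum>u\<in>{1..n}. length (R.bits0 u) + length (R.lab u)) = (\<Sum>u\<in>{1..n}. real (length (R.lab u)))"
        by (simp add: R.bits0_def)
      also have "\<dots> \<le> (\<Sum>u\<in>{1..n}. (1 + (c + 3) * l) * l)" by (rule sum_mono) (rule lenlab)
      also have "\<dots> = real n * ((1 + (c + 3) * l) * l)" by simp
      also have "\<dots> = (c + 3) * n * l^2 + n * l" by (simp add: algebra_simps power2_eq_square)
      finally show ?thesis .
    qed
    show ?thesis
      apply (rule exI[of _ R.lab], rule exI[of _ R.bits0], intro conjI)
           apply (rule R.inj_lab)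
      using lenlab apply (simp add: l_def)
        apply (simp add: R.bits0_def)
       apply (rule R.rbp)
      apply (rule R.spr)
      using tot apply (simp add: l_def)
      done
  qed
  show ?thesis
    apply (rule exI[of _ Drt], rule exI[of _ 0], rule exI[of _ 0])
    apply (rule conjI[OF computable_Drt])
    apply (rule exI[of _ "2^W0"])
    using main by blast
qed


end
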